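(* Let $D$ be an integral domain with quotient field $K$, $T$ an overring of $D$, $\star$ a semistar operation on $D$, and $\ell=\ell_{\star,T}$. The following are equivalent: (i) $T$ is $(\star,\ell)$-flat over $D$; (ii) for each nonzero prime ideal $P$ of $D$, either $(PT)^\ell=T^\ell$ or $T\subseteq D_P$; (iii) for each nonzero $x\in T$, $((D:_DxD)T)^\ell=T^\ell$, where $(D:_DxD)=\{d\in D:dx\in D\}$; (iv) $T^\ell=\bigcap\{D_{N\cap D}: N$ a prime ideal of $T$ maximal with respect to the property $(N\cap D)^{\star_f}\ne D^\star\}$; (v) for each prime ideal $Q$ of $T$ with $(Q\cap D)^{\star_f}\ne D^\star$, $D_{Q\cap D}=T_Q$; (vi) for each prime ideal $N$ of $T$ maximal with respect to the property $(N\cap D)^{\star_f}\ne D^\star$, $D_{N\cap D}=T_N$; (vii) for each quasi-$\star_f$-prime ideal $P$ of $D$, $T_{D\setminus P}$ is flat over $D_P$; (viii) for each nonzero finitely generated fractional ideal $F$ of $D$, $((D:_KF)T)^\ell=(T^\ell:_KFT)$.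
   Context: Let $D$ be an integral domain with quotient field $K$. $\overline{\mathbf F}(D)$ denotes the set of all nonzero $D$-submodules of $K$ and $\mathbf f(D)$ the set of nonzero finitely generated $D$-submodules of $K$. A semistar operation on $D$ is a map $\star:\overline{\mathbf F}(D)\to\overline{\mathbf F}(D)$, $E\mapsto E^\star$, such that for all $0\ne x\in K$ and $E,F\in\overline{\mathbf F}(D)$: (1) $(xE)^\star=xE^\star$; (2) $E\subseteq F\Rightarrow E^\star\subseteq F^\star$; (3) $E\subseteq E^\star$ and $(E^\star)^\star=E^\star$. $\star_f$ is defined by $E^{\star_f}=\bigcup\{F^\star:F\in\mathbf f(D),F\subseteq E\}$. A nonzero ideal $I$ of $D$ is a quasi-$\star$-ideal if $I^\star\cap D=I$; a quasi-$\star$-prime is a prime quasi-$\star$-ideal. An overring of $D$ is a ring $T$ with $D\subseteq T\subseteq K$; the same notions are defined for semistar operations on $T$. $T$ is $(\star,\star')$-linked to $D$ if for every nonzero finitely generated ideal $F\subseteq D$ with $F^\star=D^\star$ one has $(FT)^{\star'}=T^{\star'}$; $T$ is $(\star,\star')$-flat over $D$ if it is $(\star,\star')$-linked to $D$ and $D_{Q\cap D}=T_Q$ for every quasi-$\star'_f$-prime ideal $Q$ of $T$. The semistar operation $\ell_{\star,T}$ on $T$ is defined by $E^{\ell_{\star,T}}=\bigcap\{ET_{D\setminus P}: P$ a quasi-$\star_f$-prime ideal of $D\}$ for $E\in\overline{\mathbf F}(T)$ (equal to $K$ if there are none). *)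

theory Defs
  imports Main
begin

text \<open>Throughout, the quotient field K is modelled by a type 'a of class field;
 the domain D is a subring of 'a whose quotient field is all of 'a.\<close>

definition subring :: "'a::field set \<Rightarrow> bool" where
  "subring R \<longleftrightarrow> 0 \<in> R \<and> 1 \<in> R \<and> (\<forall>x\<in>R. \<forall>y\<in>R. x + y \<in> R \<and> x - y \<in> R \<and> x * y \<in> R)"

definition quotient_field_is_univ :: "'a::field set \<Rightarrow> bool" where
  "quotient_field_is_univ D \<longleftrightarrow> (\<forall>x. \<exists>a\<in>D. \<exists>b\<in>D. b \<noteq> 0 \<and> x = a / b)"

definition overring :: "'a::field set \<Rightarrow> 'a set \<Rightarrow> bool" where
  "overring D T \<longleftrightarrow> subring T \<and> D \<subseteq> T"

definition submod :: "'a::field set \<Rightarrow> 'a set \<Rightarrow> bool" where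
  "submod R E \<longleftrightarrow> 0 \<in> E \<and> (\<forall>x\<in>E. \<forall>y\<in>E. x + y \<in> E) \<and> (\<forall>r\<in>R. \<forall>x\<in>E. r * x \<in> E)"

definition Fbar :: "'a::field set \<Rightarrow> 'a set set" where
  "Fbar R = {E. submod R E \<and> E \<noteq> {0}}"

text \<open>R-submodule generated by S (finite R-linear combinations); lin R E is also E*R\<close>
definition lin :: "'a::field set \<Rightarrow> 'a set \<Rightarrow> 'a set" where
  "lin R S = {x. \<exists>F c. finite F \<and> F \<subseteq> S \<and> (\<forall>s\<in>F. c s \<in> R) \<and> x = (\<Sum>s\<in>F. c s * s)}"

definition fgen :: "'a::field set \<Rightarrow> 'a set set" where
  "fgen R = {E. E \<noteq> {0} \<and> (\<exists>G. finite G \<and> E = lin R G)}"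

definition semistar :: "'a::field set \<Rightarrow> ('a set \<Rightarrow> 'a set) \<Rightarrow> bool" where
  "semistar R st \<longleftrightarrow>
     (\<forall>E\<in>Fbar R. st E \<in> Fbar R) \<and>
     (\<forall>x E. x \<noteq> 0 \<longrightarrow> E \<in> Fbar R \<longrightarrow> st ((\<lambda>e. x * e) ` E) = (\<lambda>e. x * e) ` st E) \<and>
     (\<forall>E\<in>Fbar R. \<forall>F\<in>Fbar R. E \<subseteq> F \<longrightarrow> st E \<subseteq> st F) \<and>
     (\<forall>E\<in>Fbar R. E \<subseteq> st E \<and> st (st E) = st E)"

definition starf :: "'a::field set \<Rightarrow> ('a set \<Rightarrow> 'a set) \<Rightarrow> 'a set \<Rightarrow> 'a set" where
  "starf R st E = \<Union>{st F | F. F \<in> fgen R \<and> F \<subseteq> E}"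

definition ideal_of :: "'a::field set \<Rightarrow> 'a set \<Rightarrow> bool" where
  "ideal_of R I \<longleftrightarrow> I \<subseteq> R \<and> submod R I"

definition prime_ideal_of :: "'a::field set \<Rightarrow> 'a set \<Rightarrow> bool" where
  "prime_ideal_of R P \<longleftrightarrow> ideal_of R P \<and> P \<noteq> R \<and>
     (\<forall>a\<in>R. \<forall>b\<in>R. a * b \<in> P \<longrightarrow> a \<in> P \<or> b \<in> P)"

definition quasi_prime :: "'a::field set \<Rightarrow> ('a set \<Rightarrow> 'a set) \<Rightarrow> 'a set \<Rightarrow> bool" where
  "quasi_prime R st P \<longleftrightarrow> prime_ideal_of R P \<and> P \<noteq> {0} \<and> st P \<inter> R = P"

definition loc :: "'a::field set \<Rightarrow> 'a set \<Rightarrow> 'a set" where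
  "loc A S = {a / s | a s. a \<in> A \<and> s \<in> S}"

definition ell :: "'a::field set \<Rightarrow> ('a set \<Rightarrow> 'a set) \<Rightarrow> 'a set \<Rightarrow> 'a set \<Rightarrow> 'a set" where
  "ell D st T E = \<Inter>{lin (loc T (D - P)) E | P. quasi_prime D (starf D st) P}"

definition linked :: "'a::field set \<Rightarrow> ('a set \<Rightarrow> 'a set) \<Rightarrow> 'a set \<Rightarrow> ('a set \<Rightarrow> 'a set) \<Rightarrow> bool" where
  "linked D st T st' \<longleftrightarrow>
     (\<forall>F. ideal_of D F \<and> F \<in> fgen D \<and> st F = st D \<longrightarrow> st' (lin T F) = st' T)"

definition flat_st :: "'a::field set \<Rightarrow> ('a set \<Rightarrow> 'a set) \<Rightarrow> 'a set \<Rightarrow> ('a set \<Rightarrow> 'a set) \<Rightarrow> bool" where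
  "flat_st D st T st' \<longleftrightarrow> linked D st T st' \<and>
     (\<forall>Q. quasi_prime T (starf T st') Q \<longrightarrow> loc D (D - (Q \<inter> D)) = loc T (T - Q))"

text \<open>Flatness of the R-module M \<subseteq> K, via the equational criterion
 (every R-linear relation among elements of M is trivial).\<close>
definition flat_module :: "'a::field set \<Rightarrow> 'a set \<Rightarrow> bool" where
  "flat_module R M \<longleftrightarrow>
    (\<forall>n (r::nat \<Rightarrow> 'a) (x::nat \<Rightarrow> 'a).
       (\<forall>i<n. r i \<in> R \<and> x i \<in> M) \<and> (\<Sum>i<n. r i * x i) = 0 \<longrightarrow>
       (\<exists>m (a::nat \<Rightarrow> nat \<Rightarrow> 'a) (y::nat \<Rightarrow> 'a).
          (\<forall>j<m. y j \<in> M) \<and> (\<forall>i<n. \<forall>j<m. a i j \<in> R) \<and>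
          (\<forall>i<n. x i = (\<Sum>j<m. a i j * y j)) \<and>
          (\<forall>j<m. (\<Sum>i<n. r i * a i j) = 0)))"

definition colon :: "'a::field set \<Rightarrow> 'a set \<Rightarrow> 'a set" where
  "colon A B = {x. \<forall>b\<in>B. x * b \<in> A}"

definition max_prop_prime :: "'a::field set \<Rightarrow> ('a set \<Rightarrow> 'a set) \<Rightarrow> 'a set \<Rightarrow> 'a set \<Rightarrow> bool" where
  "max_prop_prime D st T N \<longleftrightarrow> prime_ideal_of T N \<and> N \<noteq> {0} \<and>
     starf D st (N \<inter> D) \<noteq> st D \<and>
     (\<forall>J. ideal_of T J \<and> N \<subseteq> J \<and> starf D st (J \<inter> D) \<noteq> st D \<longrightarrow> J = N)"

end

theory Submission imports Defs begin

lemma subringD: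
  assumes "subring R"
  shows "0 \<in> R" "1 \<in> R" "x \<in> R \<Longrightarrow> y \<in> R \<Longrightarrow> x + y \<in> R"
    "x \<in> R \<Longrightarrow> y \<in> R \<Longrightarrow> x - y \<in> R" "x \<in> R \<Longrightarrow> y \<in> R \<Longrightarrow> x * y \<in> R"
  using assms unfolding subring_def by auto

lemma subring_uminus: assumes "subring R" "x \<in> R" shows "- x \<in> R"
  using subringD(1)[OF assms(1)] subringD(4)[OF assms(1) _ assms(2), of 0] by simp

lemma subring_submod: "subring R \<Longrightarrow> R' \<subseteq> R \<Longrightarrow> submod R' R"
  unfolding submod_def subring_def by auto

lemma submod_sub: "submod R X \<Longrightarrow> R' \<subseteq> R \<Longrightarrow> submod R' X"
  unfolding submod_def by auto

lemma submod_int: "submod R X \<Longrightarrow> submod R Y \<Longrightarrow> submod R (X \<inter> Y)"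
  unfolding submod_def by auto

lemma submod_sum:
  assumes "submod R X" "finite F" "\<And>c. c \<in> F \<Longrightarrow> f c \<in> X"
  shows "sum f F \<in> X"
  using assms(2,3)
proof (induction F rule: finite_induct)
  case empty then show ?case using assms(1) unfolding submod_def by simp
next
  case (insert x F) then show ?case using assms(1) unfolding submod_def by simp
qed

lemma lin_least:
  assumes "submod R X" "A \<subseteq> X"
  shows "lin R A \<subseteq> X"
proof
  fix x assume "x \<in> lin R A"
  then obtain F c where F: "finite F" "F \<subseteq> A" "\<forall>s\<in>F. c s \<in> R" "x = (\<Sum>s\<in>F. c s * s)"
    unfolding lin_def by blast
  show "x \<in> X" unfolding F(4)
    by (rule submod_sum[OF assms(1) F(1)]) (use F assms in \<open>auto simp: submod_def\<close>)
qed

lemma lin_scal_gen: "k \<in> R \<Longrightarrow> a \<in> A \<Longrightarrow> k * a \<in> lin R A"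
  unfolding lin_def by (rule CollectI, rule exI[of _ "{a}"], rule exI[of _ "\<lambda>_. k"]) auto

lemma gen_in_lin: "1 \<in> R \<Longrightarrow> A \<subseteq> lin R A"
proof
  fix a assume "1 \<in> R" "a \<in> A"
  then have "1 * a \<in> lin R A" by (rule lin_scal_gen)
  then show "a \<in> lin R A" by simp
qed

lemma zero_in_lin: "0 \<in> lin R A"
  unfolding lin_def by (rule CollectI, rule exI[of _ "{}"]) auto

lemma lin_mono: "A \<subseteq> B \<Longrightarrow> R \<subseteq> R' \<Longrightarrow> lin R A \<subseteq> lin R' B"
proof
  fix x assume AB: "A \<subseteq> B" "R \<subseteq> R'" and "x \<in> lin R A"
  then obtain F c where F: "finite F" "F \<subseteq> A" "\<forall>s\<in>F. c s \<in> R" "x = (\<Sum>s\<in>F. c s * s)"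
    unfolding lin_def by blast
  show "x \<in> lin R' B" unfolding lin_def using F AB
    by (intro CollectI exI[of _ F] exI[of _ c]) auto
qed

lemma lin_add:
  assumes R: "0 \<in> R" "\<And>x y. x \<in> R \<Longrightarrow> y \<in> R \<Longrightarrow> x + y \<in> R"
    and x: "x \<in> lin R A" and y: "y \<in> lin R A"
  shows "x + y \<in> lin R A"
proof -
  obtain F1 c1 where F1: "finite F1" "F1 \<subseteq> A" "\<forall>s\<in>F1. c1 s \<in> R" "x = (\<Sum>s\<in>F1. c1 s * s)"
    using x unfolding lin_def by blast
  obtain F2 c2 where F2: "finite F2" "F2 \<subseteq> A" "\<forall>s\<in>F2. c2 s \<in> R" "y = (\<Sum>s\<in>F2. c2 s * s)"
    using y unfolding lin_def by blast
  define d1 where "d1 s = (if s \<in> F1 then c1 s else 0)" for s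
  define d2 where "d2 s = (if s \<in> F2 then c2 s else 0)" for s
  have e1: "x = (\<Sum>s\<in>F1 \<union> F2. d1 s * s)"
    unfolding F1(4) d1_def using F1(1) F2(1)
    by (intro sum.mono_neutral_cong_left) auto
  have e2: "y = (\<Sum>s\<in>F1 \<union> F2. d2 s * s)"
    unfolding F2(4) d2_def using F1(1) F2(1)
    by (intro sum.mono_neutral_cong_left) auto
  have "x + y = (\<Sum>s\<in>F1 \<union> F2. (d1 s + d2 s) * s)"
    unfolding e1 e2 by (simp add: sum.distrib distrib_right)
  moreover have "\<forall>s\<in>F1 \<union> F2. d1 s + d2 s \<in> R"
    using F1(3) F2(3) R unfolding d1_def d2_def by auto
  ultimately show ?thesis unfolding lin_def using F1(1,2) F2(1,2)
    by (intro CollectI exI[of _ "F1 \<union> F2"] exI[of _ "\<lambda>s. d1 s + d2 s"]) auto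
qed

lemma lin_scal:
  assumes R: "\<And>x y. x \<in> R \<Longrightarrow> y \<in> R \<Longrightarrow> x * y \<in> R" and r: "r \<in> R" and x: "x \<in> lin R A"
  shows "r * x \<in> lin R A"
proof -
  obtain F c where F: "finite F" "F \<subseteq> A" "\<forall>s\<in>F. c s \<in> R" "x = (\<Sum>s\<in>F. c s * s)"
    using x unfolding lin_def by blast
  have "r * x = (\<Sum>s\<in>F. (r * c s) * s)" unfolding F(4) by (simp add: sum_distrib_left mult.assoc)
  moreover have "\<forall>s\<in>F. r * c s \<in> R" using F(3) R r by auto
  ultimately show ?thesis unfolding lin_def using F(1,2) by (intro CollectI exI[of _ F] exI[of _ "\<lambda>s. r * c s"]) auto
qed

lemma lin_submod: "subring R \<Longrightarrow> submod R (lin R A)"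
proof -
  assume R: "subring R"
  show ?thesis unfolding submod_def
  proof (intro conjI ballI)
    show "0 \<in> lin R A" by (rule zero_in_lin)
    show "x + y \<in> lin R A" if "x \<in> lin R A" "y \<in> lin R A" for x y
      by (rule lin_add[OF subringD(1)[OF R] subringD(3)[OF R] that])
    show "r * x \<in> lin R A" if "r \<in> R" "x \<in> lin R A" for r x
      by (rule lin_scal[OF subringD(5)[OF R] that])
  qed
qed

lemma lin_sum:
  assumes "subring R" "finite F" "\<And>c. c \<in> F \<Longrightarrow> k c \<in> R" "\<And>c. c \<in> F \<Longrightarrow> g c \<in> A"
  shows "(\<Sum>c\<in>F. k c * g c) \<in> lin R A"
  by (rule submod_sum[OF lin_submod[OF assms(1)] assms(2)]) (simp add: assms lin_scal_gen)


definition msub :: "'a::field set \<Rightarrow> 'a set \<Rightarrow> bool" where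
  "msub S R \<longleftrightarrow> S \<subseteq> R \<and> 1 \<in> S \<and> 0 \<notin> S \<and> (\<forall>x\<in>S. \<forall>y\<in>S. x * y \<in> S)"

lemma loc_iff: "0 \<notin> S \<Longrightarrow> x \<in> loc A S \<longleftrightarrow> (\<exists>s\<in>S. s * x \<in> A)"
proof
  assume "0 \<notin> S" "x \<in> loc A S"
  then obtain a s where "a \<in> A" "s \<in> S" "x = a / s" unfolding loc_def by blast
  then show "\<exists>s\<in>S. s * x \<in> A" using \<open>0 \<notin> S\<close> by (intro bexI[of _ s]) auto
next
  assume "0 \<notin> S" "\<exists>s\<in>S. s * x \<in> A"
  then obtain s where "s \<in> S" "s * x \<in> A" by blast
  then have "x = (s * x) / s" using \<open>0 \<notin> S\<close> by (metis nonzero_mult_div_cancel_left)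
  then show "x \<in> loc A S" unfolding loc_def using \<open>s \<in> S\<close> \<open>s * x \<in> A\<close> by blast
qed

lemma msubD: assumes "msub S R" shows "S \<subseteq> R" "1 \<in> S" "0 \<notin> S" "x \<in> S \<Longrightarrow> y \<in> S \<Longrightarrow> x * y \<in> S"
  using assms unfolding msub_def by auto

lemma loc_subring:
  assumes A: "subring A" and S: "msub S A"
  shows "subring (loc A S)"
proof -
  note li = loc_iff[OF msubD(3)[OF S]]
  have SA: "s \<in> S \<Longrightarrow> s \<in> A" for s using msubD(1)[OF S] by blast
  have "0 \<in> loc A S" unfolding li using msubD(2)[OF S] subringD(1)[OF A] by force
  moreover have "1 \<in> loc A S" unfolding li using msubD(2)[OF S] subringD(2)[OF A] by force
  moreover have "x + y \<in> loc A S \<and> x - y \<in> loc A S \<and> x * y \<in> loc A S"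
    if xy: "x \<in> loc A S" "y \<in> loc A S" for x y
  proof -
    obtain s where s: "s \<in> S" "s * x \<in> A" using xy(1) unfolding li by blast
    obtain t where t: "t \<in> S" "t * y \<in> A" using xy(2) unfolding li by blast
    have st: "s * t \<in> S" using msubD(4)[OF S s(1) t(1)] .
    have "(s * t) * (x + y) = t * (s * x) + s * (t * y)" by (simp add: algebra_simps)
    moreover have "t * (s * x) + s * (t * y) \<in> A"
      using s t SA subringD[OF A] by simp
    ultimately have 1: "x + y \<in> loc A S" unfolding li using st by metis
    have "(s * t) * (x - y) = t * (s * x) - s * (t * y)" by (simp add: algebra_simps)
    moreover have "t * (s * x) - s * (t * y) \<in> A"
      using s t SA subringD[OF A] by simp
    ultimately have 2: "x - y \<in> loc A S" unfolding li using st by metis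
    have "(s * t) * (x * y) = (s * x) * (t * y)" by (simp add: algebra_simps)
    moreover have "(s * x) * (t * y) \<in> A"
      using s t SA subringD[OF A] by simp
    ultimately have 3: "x * y \<in> loc A S" unfolding li using st by metis
    show ?thesis using 1 2 3 by blast
  qed
  ultimately show ?thesis unfolding subring_def by blast
qed

lemma loc_sup: "1 \<in> S \<Longrightarrow> A \<subseteq> loc A S"
  unfolding loc_def by force

lemma loc_mono: "A \<subseteq> B \<Longrightarrow> S \<subseteq> S' \<Longrightarrow> loc A S \<subseteq> loc B S'"
  unfolding loc_def by blast

lemma common_denom:
  assumes R: "subring R" and S: "msub S R" and X: "finite X"
    and h: "\<forall>x\<in>X. \<exists>s\<in>S. s * x \<in> R"
  shows "\<exists>s\<in>S. \<forall>x\<in>X. s * x \<in> R"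
  using X h
proof (induction X rule: finite_induct)
  case empty then show ?case using msubD(2)[OF S] by blast
next
  case (insert x X)
  then obtain s where s: "s \<in> S" "\<forall>y\<in>X. s * y \<in> R" by blast
  obtain t where t: "t \<in> S" "t * x \<in> R" using insert.prems by blast
  have "s \<in> R" "t \<in> R" using s(1) t(1) msubD(1)[OF S] by auto
  have "\<forall>y\<in>insert x X. (s * t) * y \<in> R"
  proof
    fix y assume "y \<in> insert x X"
    then show "(s * t) * y \<in> R"
    proof
      assume "y = x"
      have "(s * t) * x = s * (t * x)" by (simp add: algebra_simps)
      then show ?thesis using subringD(5)[OF R \<open>s \<in> R\<close> t(2)] \<open>y = x\<close> by metis
    next
      assume "y \<in> X"
      have "(s * t) * y = t * (s * y)" by (simp add: algebra_simps)
      moreover have "t * (s * y) \<in> R" using subringD(5)[OF R \<open>t \<in> R\<close>] s(2) \<open>y \<in> X\<close> by blast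
      ultimately show ?thesis by metis
    qed
  qed
  then show ?case using msubD(4)[OF S s(1) t(1)] by blast
qed

lemma G1:
  assumes T: "subring T" and S: "msub S T" and J: "submod T J"
    and x: "x \<in> lin (loc T S) A" and h: "\<And>a. a \<in> A \<Longrightarrow> \<exists>s\<in>S. s * a \<in> J"
  shows "\<exists>s\<in>S. s * x \<in> J"
proof -
  note li = loc_iff[OF msubD(3)[OF S]]
  have ST: "s \<in> S \<Longrightarrow> s \<in> T" for s using msubD(1)[OF S] by blast
  let ?X = "{x. \<exists>s\<in>S. s * x \<in> J}"
  have "submod (loc T S) ?X" unfolding submod_def
  proof (intro conjI ballI)
    show "0 \<in> ?X" using msubD(2)[OF S] J unfolding submod_def by force
    fix y z assume "y \<in> ?X" "z \<in> ?X"
    then obtain s t where st: "s \<in> S" "s * y \<in> J" "t \<in> S" "t * z \<in> J" by blast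
    have "(s * t) * (y + z) = t * (s * y) + s * (t * z)" by (simp add: algebra_simps)
    moreover have "t * (s * y) + s * (t * z) \<in> J" using st ST J unfolding submod_def by simp
    ultimately show "y + z \<in> ?X" using msubD(4)[OF S st(1) st(3)] by (metis (mono_tags, lifting) mem_Collect_eq)
  next
    fix r y assume "r \<in> loc T S" "y \<in> ?X"
    then obtain u s where us: "u \<in> S" "u * r \<in> T" "s \<in> S" "s * y \<in> J" unfolding li by blast
    have "(u * s) * (r * y) = (u * r) * (s * y)" by (simp add: algebra_simps)
    moreover have "(u * r) * (s * y) \<in> J" using us J unfolding submod_def by simp
    ultimately show "r * y \<in> ?X" using msubD(4)[OF S us(1) us(3)] by (metis (mono_tags, lifting) mem_Collect_eq)
  qed
  moreover have "A \<subseteq> ?X" using h by blast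
  ultimately have "lin (loc T S) A \<subseteq> ?X" by (rule lin_least)
  then show ?thesis using x by blast
qed

lemma LT:
  assumes T: "subring T" and S: "msub S T" and E: "E \<subseteq> T" and s: "s \<in> S" "s \<in> E"
  shows "lin (loc T S) E = loc T S"
proof
  have LS: "subring (loc T S)" by (rule loc_subring[OF T S])
  show "lin (loc T S) E \<subseteq> loc T S"
    by (rule lin_least[OF subring_submod[OF LS order_refl]]) (use E loc_sup[OF msubD(2)[OF S]] in blast)
  show "loc T S \<subseteq> lin (loc T S) E"
  proof
    fix y assume y: "y \<in> loc T S"
    note li = loc_iff[OF msubD(3)[OF S]]
    obtain u where u: "u \<in> S" "u * y \<in> T" using y unfolding li by blast
    have s0: "s \<noteq> 0" using s(1) msubD(3)[OF S] by blast
    have "(u * s) * (y / s) = u * y" using s0 by simp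
    then have "y / s \<in> loc T S" unfolding li using msubD(4)[OF S u(1) s(1)] u(2) by metis
    then have "(y / s) * s \<in> lin (loc T S) E" using s(2) by (rule lin_scal_gen)
    then show "y \<in> lin (loc T S) E" using s0 by simp
  qed
qed

lemma lin_mult:
  assumes R1: "subring R1" and R2: "subring R2" and X: "submod R1 X" and R12: "\<And>a b. a \<in> R1 \<Longrightarrow> b \<in> R2 \<Longrightarrow> a * b \<in> R1"
    and AB: "\<And>a b. a \<in> A \<Longrightarrow> b \<in> B \<Longrightarrow> a * b \<in> X"
    and y: "y \<in> lin R1 A" and z: "z \<in> lin R2 B"
  shows "y * z \<in> X"
proof -
  let ?Y = "{y. \<forall>z\<in>lin R2 B. y * z \<in> X}"
  have "A \<subseteq> ?Y"
  proof
    fix a assume a: "a \<in> A"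
    let ?Z = "{z. a * z \<in> X}"
    have "submod R2 ?Z" unfolding submod_def
    proof (intro conjI ballI)
      show "0 \<in> ?Z" using X unfolding submod_def by simp
      show "x + y \<in> ?Z" if "x \<in> ?Z" "y \<in> ?Z" for x y
        using that X unfolding submod_def by (simp add: distrib_left)
      show "r * x \<in> ?Z" if "r \<in> R2" "x \<in> ?Z" for r x
      proof -
        have "a * (r * x) = r * (a * x)" by (simp add: algebra_simps)
        moreover have "r * (a * x) \<in> X" using that X subringD(2)[OF R1] R12[of 1 r] unfolding submod_def by simp
        ultimately show ?thesis by (metis mem_Collect_eq)
      qed
    qed
    then have "lin R2 B \<subseteq> ?Z" by (rule lin_least) (use AB a in blast)
    then show "a \<in> ?Y" by blast
  qed
  moreover have "submod R1 ?Y" unfolding submod_def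
  proof (intro conjI ballI)
    show "0 \<in> ?Y" using X unfolding submod_def by simp
    show "x + y \<in> ?Y" if "x \<in> ?Y" "y \<in> ?Y" for x y
      using that X unfolding submod_def by (simp add: distrib_right)
    show "r * x \<in> ?Y" if "r \<in> R1" "x \<in> ?Y" for r x
      using that X unfolding submod_def by (simp add: mult.assoc)
  qed
  ultimately have "lin R1 A \<subseteq> ?Y" using lin_least by blast
  then show ?thesis using y z by blast
qed

lemma colon_lin:
  assumes D: "subring D"
  shows "colon D (lin D G) = colon D G"
proof
  show "colon D (lin D G) \<subseteq> colon D G"
    using gen_in_lin[OF subringD(2)[OF D], of G] unfolding colon_def by blast
  show "colon D G \<subseteq> colon D (lin D G)"
  proof
    fix y assume y: "y \<in> colon D G"
    let ?Z = "{z. y * z \<in> D}"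
    have "submod D ?Z" unfolding submod_def
    proof (intro conjI ballI)
      show "0 \<in> ?Z" using subringD(1)[OF D] by simp
      show "x + z \<in> ?Z" if "x \<in> ?Z" "z \<in> ?Z" for x z
        using that subringD(3)[OF D] by (simp add: distrib_left)
      show "r * x \<in> ?Z" if "r \<in> D" "x \<in> ?Z" for r x
      proof -
        have "r * (y * x) \<in> D" using that subringD(5)[OF D] by simp
        then show ?thesis by (metis mult.left_commute mem_Collect_eq)
      qed
    qed
    then have "lin D G \<subseteq> ?Z" by (rule lin_least) (use y in \<open>auto simp: colon_def\<close>)
    then show "y \<in> colon D (lin D G)" unfolding colon_def by blast
  qed
qed

lemma lin_scale_image:
  assumes D: "subring D" and b: "b \<noteq> 0"
  shows "(\<lambda>e. b * e) ` lin D G = lin D ((\<lambda>g. b * g) ` G)"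
proof
  have LS: "submod D (lin D ((\<lambda>g. b * g) ` G))" by (rule lin_submod[OF D])
  let ?Y = "{e. b * e \<in> lin D ((\<lambda>g. b * g) ` G)}"
  have "submod D ?Y" unfolding submod_def
  proof (intro conjI ballI)
    show "0 \<in> ?Y" using LS unfolding submod_def by simp
    show "x + z \<in> ?Y" if "x \<in> ?Y" "z \<in> ?Y" for x z
      using that LS unfolding submod_def by (simp add: distrib_left)
    show "r * x \<in> ?Y" if "r \<in> D" "x \<in> ?Y" for r x
    proof -
      have "r * (b * x) \<in> lin D ((\<lambda>g. b * g) ` G)" using that LS unfolding submod_def by blast
      then show ?thesis by (metis mult.left_commute mem_Collect_eq)
    qed
  qed
  then have "lin D G \<subseteq> ?Y" by (rule lin_least) (use gen_in_lin[OF subringD(2)[OF D]] in blast)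
  then show "(\<lambda>e. b * e) ` lin D G \<subseteq> lin D ((\<lambda>g. b * g) ` G)" by blast
  have LS2: "submod D (lin D G)" by (rule lin_submod[OF D])
  let ?Z = "{z. z / b \<in> lin D G}"
  have "submod D ?Z" unfolding submod_def
  proof (intro conjI ballI)
    show "0 \<in> ?Z" using LS2 unfolding submod_def by simp
    show "x + y \<in> ?Z" if "x \<in> ?Z" "y \<in> ?Z" for x y
      using that LS2 unfolding submod_def by (simp add: add_divide_distrib)
    show "r * x \<in> ?Z" if "r \<in> D" "x \<in> ?Z" for r x
    proof -
      have "r * (x / b) \<in> lin D G" using that LS2 unfolding submod_def by blast
      then show ?thesis by simp
    qed
  qed
  then have "lin D ((\<lambda>g. b * g) ` G) \<subseteq> ?Z" by (rule lin_least) (use gen_in_lin[OF subringD(2)[OF D], of G] b in auto)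
  then show "lin D ((\<lambda>g. b * g) ` G) \<subseteq> (\<lambda>e. b * e) ` lin D G"
  proof (intro subsetI)
    fix z assume "lin D ((\<lambda>g. b * g) ` G) \<subseteq> ?Z" "z \<in> lin D ((\<lambda>g. b * g) ` G)"
    then have "z / b \<in> lin D G" by blast
    moreover have "z = b * (z / b)" using b by simp
    ultimately show "z \<in> (\<lambda>e. b * e) ` lin D G" by blast
  qed
qed

lemma zorn_above:
  assumes I: "I \<in> A" and ch: "\<And>C. C \<noteq> {} \<Longrightarrow> C \<subseteq> A \<Longrightarrow> chain\<^sub>\<subseteq> C \<Longrightarrow> \<Union>C \<in> A"
  shows "\<exists>M\<in>A. I \<subseteq> M \<and> (\<forall>X\<in>A. M \<subseteq> X \<longrightarrow> X = M)"
proof -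
  let ?A = "{J\<in>A. I \<subseteq> J}"
  have "\<forall>C\<in>chains ?A. \<exists>U\<in>?A. \<forall>X\<in>C. X \<subseteq> U"
  proof
    fix C assume C: "C \<in> chains ?A"
    then have C1: "C \<subseteq> ?A" and C2: "chain\<^sub>\<subseteq> C" unfolding chains_def by auto
    show "\<exists>U\<in>?A. \<forall>X\<in>C. X \<subseteq> U"
    proof (cases "C = {}")
      case True
      have "I \<in> ?A" using I by simp
      then show ?thesis using True by (intro bexI[of _ I]) auto
    next
      case False
      have C3: "C \<subseteq> A" using C1 by auto
      have "\<Union>C \<in> A" by (rule ch[OF False C3 C2])
      moreover have "I \<subseteq> \<Union>C" using False C1 by auto
      ultimately have "\<Union>C \<in> ?A" by simp
      then show ?thesis by (intro bexI[of _ "\<Union>C"]) auto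
    qed
  qed
  from Zorn_Lemma2[OF this] obtain M where M: "M \<in> ?A" "\<forall>X\<in>?A. M \<subseteq> X \<longrightarrow> X = M" by blast
  have "\<forall>X\<in>A. M \<subseteq> X \<longrightarrow> X = M"
  proof (intro ballI impI)
    fix X assume "X \<in> A" "M \<subseteq> X"
    then have "X \<in> ?A" using M(1) by auto
    then show "X = M" using M(2) \<open>M \<subseteq> X\<close> by blast
  qed
  then show ?thesis using M(1) by blast
qed

lemma chain_ideal:
  assumes "C \<noteq> {}" "chain\<^sub>\<subseteq> C" "\<And>J. J \<in> C \<Longrightarrow> ideal_of R J"
  shows "ideal_of R (\<Union>C)"
  unfolding ideal_of_def submod_def
proof (intro conjI ballI)
  show "\<Union>C \<subseteq> R" using assms(3) unfolding ideal_of_def by blast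
  show "0 \<in> \<Union>C" using assms(1,3) unfolding ideal_of_def submod_def by blast
  show "x + y \<in> \<Union>C" if "x \<in> \<Union>C" "y \<in> \<Union>C" for x y
  proof -
    obtain J1 J2 where "J1 \<in> C" "J2 \<in> C" "x \<in> J1" "y \<in> J2" using \<open>x \<in> \<Union>C\<close> \<open>y \<in> \<Union>C\<close> by blast
    moreover then have "J1 \<subseteq> J2 \<or> J2 \<subseteq> J1" using assms(2) unfolding chain_subset_def by blast
    ultimately show ?thesis using assms(3) unfolding ideal_of_def submod_def by blast
  qed
  show "r * x \<in> \<Union>C" if "r \<in> R" "x \<in> \<Union>C" for r x
    using that assms(3) unfolding ideal_of_def submod_def by blast
qed

lemma finite_in_chain:
  assumes "finite G" "G \<subseteq> \<Union>C" "C \<noteq> {}" "chain\<^sub>\<subseteq> C"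
  shows "\<exists>J\<in>C. G \<subseteq> J"
  using finite_subset_Union_chain[OF assms(1,2,3)] assms(4) unfolding chain_subset_alt_def by blast

lemma ideal_ext:
  assumes R: "subring R" and J: "ideal_of R J" and a: "a \<in> R"
  shows "ideal_of R {j + a * r | j r. j \<in> J \<and> r \<in> R}" "J \<subseteq> {j + a * r | j r. j \<in> J \<and> r \<in> R}"
    "a \<in> {j + a * r | j r. j \<in> J \<and> r \<in> R}"
proof -
  define E where "E = {j + a * r | j r. j \<in> J \<and> r \<in> R}"
  have memE: "z \<in> E \<longleftrightarrow> (\<exists>j\<in>J. \<exists>r\<in>R. z = j + a * r)" for z unfolding E_def by blast
  have J0: "0 \<in> J" and JR: "J \<subseteq> R" and Jadd: "\<And>x y. x \<in> J \<Longrightarrow> y \<in> J \<Longrightarrow> x + y \<in> J"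
    and Jm: "\<And>r x. r \<in> R \<Longrightarrow> x \<in> J \<Longrightarrow> r * x \<in> J"
    using J unfolding ideal_of_def submod_def by auto
  have "ideal_of R E" unfolding ideal_of_def submod_def
  proof (intro conjI ballI subsetI)
    fix z assume "z \<in> E"
    then obtain j r where "j \<in> J" "r \<in> R" "z = j + a * r" unfolding memE by blast
    then show "z \<in> R" using JR a subringD(3,5)[OF R] by blast
  next
    show "0 \<in> E" unfolding memE using J0 subringD(1)[OF R] by (intro bexI[of _ 0]) auto
  next
    fix x y assume "x \<in> E" "y \<in> E"
    then obtain j1 r1 j2 r2 where jr: "x = j1 + a * r1" "y = j2 + a * r2" "j1 \<in> J" "j2 \<in> J" "r1 \<in> R" "r2 \<in> R"
      unfolding memE by blast
    have "x + y = (j1 + j2) + a * (r1 + r2)" using jr by (simp add: algebra_simps)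
    moreover have "j1 + j2 \<in> J" "r1 + r2 \<in> R" using jr Jadd subringD(3)[OF R] by auto
    ultimately show "x + y \<in> E" unfolding memE by blast
  next
    fix t x assume t: "t \<in> R" and "x \<in> E"
    then obtain j1 r1 where jr: "x = j1 + a * r1" "j1 \<in> J" "r1 \<in> R" unfolding memE by blast
    have "t * x = t * j1 + a * (t * r1)" using jr by (simp add: algebra_simps)
    moreover have "t * j1 \<in> J" "t * r1 \<in> R" using jr Jm t subringD(5)[OF R] by auto
    ultimately show "t * x \<in> E" unfolding memE by blast
  qed
  then show "ideal_of R {j + a * r | j r. j \<in> J \<and> r \<in> R}" unfolding E_def .
  have "J \<subseteq> E"
  proof
    fix x assume "x \<in> J"
    moreover have "x = x + a * 0" by simp
    ultimately show "x \<in> E" unfolding memE using subringD(1)[OF R] by blast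
  qed
  then show "J \<subseteq> {j + a * r | j r. j \<in> J \<and> r \<in> R}" unfolding E_def .
  have "a = 0 + a * 1" by simp
  then have "a \<in> E" unfolding memE using J0 subringD(2)[OF R] by blast
  then show "a \<in> {j + a * r | j r. j \<in> J \<and> r \<in> R}" unfolding E_def .
qed

lemma prime_avoid:
  assumes T: "subring T" and J: "ideal_of T J" and S: "msub S T" and JS: "J \<inter> S = {}"
  shows "\<exists>Q. prime_ideal_of T Q \<and> J \<subseteq> Q \<and> Q \<inter> S = {}"
proof -
  define A where "A = {K. ideal_of T K \<and> K \<inter> S = {}}"
  have "\<exists>M\<in>A. J \<subseteq> M \<and> (\<forall>X\<in>A. M \<subseteq> X \<longrightarrow> X = M)"
  proof (rule zorn_above)
    show "J \<in> A" using J JS unfolding A_def by simp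
    fix C assume C: "C \<noteq> {}" "C \<subseteq> A" "chain\<^sub>\<subseteq> C"
    have "ideal_of T K" if "K \<in> C" for K using C(2) that unfolding A_def by blast
    then have "ideal_of T (\<Union>C)" by (rule chain_ideal[OF C(1,3)])
    moreover have "\<Union>C \<inter> S = {}" using C(2) unfolding A_def by auto
    ultimately show "\<Union>C \<in> A" unfolding A_def by simp
  qed
  then obtain Q where QA: "Q \<in> A" and JQ: "J \<subseteq> Q" and mx0: "\<forall>X\<in>A. Q \<subseteq> X \<longrightarrow> X = Q"
    by (elim bexE conjE)
  have mx: "X = Q" if "X \<in> A" "Q \<subseteq> X" for X using mx0 that by blast
  have Q: "ideal_of T Q" "Q \<inter> S = {}" using QA unfolding A_def by auto
  have QR: "Q \<subseteq> T" and Qadd: "\<And>x y. x \<in> Q \<Longrightarrow> y \<in> Q \<Longrightarrow> x + y \<in> Q"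
    and Qm: "\<And>r x. r \<in> T \<Longrightarrow> x \<in> Q \<Longrightarrow> r * x \<in> Q"
    using Q(1) unfolding ideal_of_def submod_def by auto
  have QT: "Q \<noteq> T"
  proof
    assume "Q = T"
    then have "1 \<in> Q" using msubD(1,2)[OF S] by auto
    then show False using Q(2) msubD(2)[OF S] by auto
  qed
  have ex: "\<exists>q t. q \<in> Q \<and> t \<in> T \<and> q + x * t \<in> S" if x: "x \<in> T" "x \<notin> Q" for x
  proof -
    define E where "E = {j + x * r | j r. j \<in> Q \<and> r \<in> T}"
    note E = ideal_ext[OF T Q(1) x(1), folded E_def]
    have "E \<noteq> Q" using E(3) x(2) by auto
    then have "E \<notin> A" using mx[OF _ E(2)] by auto
    then have "E \<inter> S \<noteq> {}" using E(1) unfolding A_def by auto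
    then obtain z where "z \<in> E" "z \<in> S" by auto
    then obtain j r where "j \<in> Q" "r \<in> T" "z = j + x * r" unfolding E_def by auto
    then show ?thesis using \<open>z \<in> S\<close> by auto
  qed
  have "a \<in> Q \<or> b \<in> Q" if ab: "a \<in> T" "b \<in> T" "a * b \<in> Q" for a b
  proof (rule ccontr)
    assume nab: "\<not> (a \<in> Q \<or> b \<in> Q)"
    obtain q1 t1 where 1: "q1 \<in> Q" "t1 \<in> T" "q1 + a * t1 \<in> S" using ex[of a] ab nab by auto
    obtain q2 t2 where 2: "q2 \<in> Q" "t2 \<in> T" "q2 + b * t2 \<in> S" using ex[of b] ab nab by auto
    have eq: "(q1 + a * t1) * (q2 + b * t2) = (q2 + b * t2) * q1 + (a * t1) * q2 + (t1 * t2) * (a * b)"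
      by (simp add: algebra_simps)
    have "q2 \<in> T" using 2(1) QR by blast
    then have "q2 + b * t2 \<in> T" using subringD(3)[OF T _ subringD(5)[OF T ab(2) 2(2)]] by blast
    then have i1: "(q2 + b * t2) * q1 \<in> Q" using Qm 1(1) by blast
    have "a * t1 \<in> T" using ab 1 subringD(5)[OF T] by blast
    then have i2: "(a * t1) * q2 \<in> Q" using Qm 2(1) by blast
    have "t1 * t2 \<in> T" using 1 2 subringD(5)[OF T] by blast
    then have i3: "(t1 * t2) * (a * b) \<in> Q" using Qm ab(3) by blast
    have "(q1 + a * t1) * (q2 + b * t2) \<in> Q" unfolding eq using Qadd[OF Qadd[OF i1 i2] i3] .
    moreover have "(q1 + a * t1) * (q2 + b * t2) \<in> S" using msubD(4)[OF S 1(3) 2(3)] .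
    ultimately show False using Q(2) by auto
  qed
  then have "prime_ideal_of T Q" unfolding prime_ideal_of_def using Q(1) QT by blast
  then show ?thesis using Q JQ by blast
qed

lemma flat_crit_imp:
  assumes R: "subring R" and den: "\<And>x. \<exists>b\<in>R. b \<noteq> 0 \<and> b * x \<in> R"
    and M: "subring M" and fl: "flat_module R M" and x: "x \<in> M"
  shows "1 \<in> lin M {d\<in>R. d * x \<in> R}"
proof -
  obtain b where b: "b \<in> R" "b \<noteq> 0" "b * x \<in> R" using den by blast
  define r where "r i = (if i = 0 then b else - (b * x))" for i :: nat
  define xx where "xx i = (if i = 0 then x else 1)" for i :: nat
  have "\<forall>i<2. r i \<in> R \<and> xx i \<in> M"
    using b subring_uminus[OF R] x subringD(2)[OF M] unfolding r_def xx_def by auto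
  moreover have "(\<Sum>i<2. r i * xx i) = 0"
    unfolding r_def xx_def by (simp add: numeral_2_eq_2)
  ultimately have "\<exists>m (a::nat \<Rightarrow> nat \<Rightarrow> 'a) (y::nat \<Rightarrow> 'a).
          (\<forall>j<m. y j \<in> M) \<and> (\<forall>i<2. \<forall>j<m. a i j \<in> R) \<and>
          (\<forall>i<2. xx i = (\<Sum>j<m. a i j * y j)) \<and>
          (\<forall>j<m. (\<Sum>i<2. r i * a i j) = 0)"
    using fl[unfolded flat_module_def, rule_format, of 2 r xx] by blast
  then obtain m :: nat and a :: "nat \<Rightarrow> nat \<Rightarrow> 'a" and y :: "nat \<Rightarrow> 'a"
    where may: "\<forall>j<m. y j \<in> M" "\<forall>i<2. \<forall>j<m. a i j \<in> R"
    "\<forall>i<2. xx i = (\<Sum>j<m. a i j * y j)" "\<forall>j<m. (\<Sum>i<2. r i * a i j) = 0"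
    by blast
  have 1: "1 = (\<Sum>j<m. a 1 j * y j)" using may(3)[rule_format, of 1] unfolding xx_def by simp
  have "a 1 j \<in> {d\<in>R. d * x \<in> R}" if j: "j < m" for j
  proof -
    have "b * a 0 j - (b * x) * a 1 j = 0" using may(4) j unfolding r_def by (simp add: numeral_2_eq_2)
    then have "b * (a 0 j - x * a 1 j) = 0" by (simp add: algebra_simps)
    then have "a 1 j * x = a 0 j" using b(2) by (simp add: algebra_simps)
    then show ?thesis using may(2) j by auto
  qed
  then have "(\<Sum>j<m. y j * a 1 j) \<in> lin M {d\<in>R. d * x \<in> R}"
    using may(1) by (intro lin_sum[OF M]) auto
  then show ?thesis using 1 by (simp add: mult.commute)
qed

lemma flat_crit_rev:
  assumes M: "subring M"
    and h: "\<And>X. finite X \<Longrightarrow> X \<subseteq> M \<Longrightarrow> 1 \<in> lin M {d\<in>R. \<forall>x\<in>X. d * x \<in> R}"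
  shows "flat_module R M"
  unfolding flat_module_def
proof (intro allI impI)
  fix n and r xx :: "nat \<Rightarrow> 'a"
  assume rel: "(\<forall>i<n. r i \<in> R \<and> xx i \<in> M) \<and> (\<Sum>i<n. r i * xx i) = 0"
  let ?X = "xx ` {..<n}"
  have "finite ?X" "?X \<subseteq> M" using rel by auto
  then have "1 \<in> lin M {d\<in>R. \<forall>x\<in>?X. d * x \<in> R}" by (rule h)
  then obtain F e where F: "finite F" "F \<subseteq> {d\<in>R. \<forall>x\<in>?X. d * x \<in> R}" "\<forall>c\<in>F. e c \<in> M"
    "1 = (\<Sum>c\<in>F. e c * c)" unfolding lin_def by blast
  obtain h where h: "bij_betw h {0..<card F} F" using ex_bij_betw_nat_finite[OF F(1)] by blast
  define m where "m = card F"
  define a where "a i j = h j * xx i" for i j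
  define y where "y j = e (h j)" for j
  have hF: "j < m \<Longrightarrow> h j \<in> F" for j using h unfolding m_def bij_betw_def by auto
  have sumF: "(\<Sum>j<m. g (h j)) = (\<Sum>c\<in>F. g c)" for g :: "'a \<Rightarrow> 'a"
    using sum.reindex_bij_betw[OF h, of g] unfolding m_def by (simp add: atLeast0LessThan)
  show "\<exists>m (a::nat \<Rightarrow> nat \<Rightarrow> 'a) (y::nat \<Rightarrow> 'a). (\<forall>j<m. y j \<in> M) \<and> (\<forall>i<n. \<forall>j<m. a i j \<in> R) \<and>
          (\<forall>i<n. xx i = (\<Sum>j<m. a i j * y j)) \<and> (\<forall>j<m. (\<Sum>i<n. r i * a i j) = 0)"
  proof (intro exI conjI allI impI)
    show "y j \<in> M" if "j < m" for j using hF[OF that] F(3) unfolding y_def by blast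
    show "a i j \<in> R" if "i < n" "j < m" for i j using hF[OF that(2)] F(2) that(1) unfolding a_def by blast
    show "xx i = (\<Sum>j<m. a i j * y j)" if "i < n" for i
    proof -
      have "(\<Sum>j<m. a i j * y j) = (\<Sum>j<m. xx i * (e (h j) * h j))" unfolding a_def y_def
        by (simp add: algebra_simps)
      also have "\<dots> = xx i * (\<Sum>j<m. e (h j) * h j)" by (simp add: sum_distrib_left)
      also have "\<dots> = xx i * (\<Sum>c\<in>F. e c * c)" using sumF[of "\<lambda>c. e c * c"] by simp
      finally show ?thesis using F(4) by simp
    qed
    show "(\<Sum>i<n. r i * a i j) = 0" if "j < m" for j
    proof -
      have "(\<Sum>i<n. r i * a i j) = h j * (\<Sum>i<n. r i * xx i)" unfolding a_def
        by (simp add: sum_distrib_left algebra_simps)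
      then show ?thesis using rel by simp
    qed
  qed
qed


locale ctx =
  fixes D T :: "'a::field set" and st :: "'a set \<Rightarrow> 'a set"
  assumes D: "subring D" and QF: "quotient_field_is_univ D" and OV: "overring D T"
    and SS: "semistar D st"
begin

lemma T: "subring T" and DT: "D \<subseteq> T"
  using OV unfolding overring_def by auto

lemma D0: "0 \<in> D" and D1: "1 \<in> D" and T0: "0 \<in> T" and T1: "1 \<in> T"
  using subringD(1,2)[OF D] subringD(1,2)[OF T] by auto

lemma Dadd: "x \<in> D \<Longrightarrow> y \<in> D \<Longrightarrow> x + y \<in> D" and Dmul: "x \<in> D \<Longrightarrow> y \<in> D \<Longrightarrow> x * y \<in> D"
  and Tadd: "x \<in> T \<Longrightarrow> y \<in> T \<Longrightarrow> x + y \<in> T" and Tmul: "x \<in> T \<Longrightarrow> y \<in> T \<Longrightarrow> x * y \<in> T"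
  using subringD(3,5)[OF D] subringD(3,5)[OF T] by auto

lemma den: "\<exists>b\<in>D. b \<noteq> 0 \<and> b * x \<in> D"
proof -
  obtain a b where "a \<in> D" "b \<in> D" "b \<noteq> 0" "x = a / b" using QF unfolding quotient_field_is_univ_def by blast
  then show ?thesis by (intro bexI[of _ b]) auto
qed

lemma ideal_props:
  assumes "ideal_of R I"
  shows "I \<subseteq> R" "0 \<in> I" "x \<in> I \<Longrightarrow> y \<in> I \<Longrightarrow> x + y \<in> I" "r \<in> R \<Longrightarrow> x \<in> I \<Longrightarrow> r * x \<in> I"
  using assms unfolding ideal_of_def submod_def by auto

lemma ideal_one:
  assumes "ideal_of R I" "1 \<in> I" shows "I = R"
proof
  show "I \<subseteq> R" using ideal_props(1)[OF assms(1)] .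
  show "R \<subseteq> I"
  proof
    fix r assume "r \<in> R"
    then have "r * 1 \<in> I" using ideal_props(4)[OF assms(1)] assms(2) by blast
    then show "r \<in> I" by simp
  qed
qed

lemma prime_props:
  assumes "prime_ideal_of R P"
  shows "ideal_of R P" "P \<noteq> R" "1 \<notin> P" "0 \<in> P" "P \<subseteq> R"
    "a \<in> R \<Longrightarrow> b \<in> R \<Longrightarrow> a * b \<in> P \<Longrightarrow> a \<in> P \<or> b \<in> P"
  using assms ideal_one[of R P] ideal_props[of R P] unfolding prime_ideal_of_def by auto

lemma msub_compl:
  assumes R: "subring R" and P: "prime_ideal_of R P" and RT: "R \<subseteq> T'"
  shows "msub (R - P) T'" "msub (R - P) R"
proof -
  have "x * y \<in> R - P" if "x \<in> R - P" "y \<in> R - P" for x y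
    using that prime_props(6)[OF P, of x y] subringD(5)[OF R, of x y] by auto
  then show "msub (R - P) T'" "msub (R - P) R" unfolding msub_def
    using prime_props(3,4)[OF P] subringD(2)[OF R] RT by auto
qed

lemma msub_DQ:
  assumes Q: "prime_ideal_of T Q"
  shows "msub (D - Q) T" "msub (D - Q) D" "msub (T - Q) T"
proof -
  have "x * y \<in> D - Q" if "x \<in> D - Q" "y \<in> D - Q" for x y
    using that prime_props(6)[OF Q, of x y] Dmul[of x y] DT by auto
  then show "msub (D - Q) T" "msub (D - Q) D" unfolding msub_def
    using prime_props(3,4)[OF Q] D1 DT by auto
  show "msub (T - Q) T" by (rule msub_compl(2)[OF T Q order_refl])
qed

abbreviation qp where "qp P \<equiv> quasi_prime D (starf D st) P"

lemma qp_props: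
  assumes "qp P"
  shows "prime_ideal_of D P" "P \<noteq> {0}" "starf D st P \<inter> D = P" "0 \<in> P" "1 \<notin> P" "P \<subseteq> D"
    "msub (D - P) T" "msub (D - P) D" "subring (loc T (D - P))" "subring (loc D (D - P))"
proof -
  show P: "prime_ideal_of D P" "P \<noteq> {0}" "starf D st P \<inter> D = P"
    using assms unfolding quasi_prime_def by auto
  show "0 \<in> P" "1 \<notin> P" "P \<subseteq> D" using prime_props[OF P(1)] by auto
  show M: "msub (D - P) T" "msub (D - P) D" using msub_compl[OF D P(1) DT] by auto
  show "subring (loc T (D - P))" by (rule loc_subring[OF T M(1)])
  show "subring (loc D (D - P))" by (rule loc_subring[OF D M(2)])
qed

lemma NZ:
  assumes J: "ideal_of T J" "J \<noteq> {0}"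
  shows "\<exists>d\<in>J \<inter> D. d \<noteq> 0"
proof -
  obtain j where j: "j \<in> J" "j \<noteq> 0" using J ideal_props(2)[OF J(1)] by blast
  obtain b where b: "b \<in> D" "b \<noteq> 0" "b * j \<in> D" using den by blast
  have "b * j \<in> J" using ideal_props(4)[OF J(1) _ j(1)] b(1) DT by blast
  then show ?thesis using b j by (intro bexI[of _ "b * j"]) auto
qed

lemma ideal_cap_D:
  assumes J: "ideal_of T J" shows "ideal_of D (J \<inter> D)"
  unfolding ideal_of_def submod_def
  using ideal_props[OF J] D0 Dadd Dmul DT by auto

lemma D_Fbar: "D \<in> Fbar D"
  unfolding Fbar_def using subring_submod[OF D order_refl] D1 by auto

lemma lin_Fbar: "lin D G \<noteq> {0} \<Longrightarrow> lin D G \<in> Fbar D"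
  unfolding Fbar_def using lin_submod[OF D] by auto

lemma fgen_Fbar: "F \<in> fgen D \<Longrightarrow> F \<in> Fbar D"
  unfolding fgen_def using lin_Fbar by auto

lemma st_Fbar: "E \<in> Fbar D \<Longrightarrow> st E \<in> Fbar D"
  and st_ext: "E \<in> Fbar D \<Longrightarrow> E \<subseteq> st E"
  and st_idem: "E \<in> Fbar D \<Longrightarrow> st (st E) = st E"
  and st_mono: "E \<in> Fbar D \<Longrightarrow> F \<in> Fbar D \<Longrightarrow> E \<subseteq> F \<Longrightarrow> st E \<subseteq> st F"
  and st_scale: "x \<noteq> 0 \<Longrightarrow> E \<in> Fbar D \<Longrightarrow> st ((\<lambda>e. x * e) ` E) = (\<lambda>e. x * e) ` st E"
  using SS unfolding semistar_def by auto

lemma st_submod: "E \<in> Fbar D \<Longrightarrow> submod D (st E)"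
  using st_Fbar unfolding Fbar_def by auto

lemma one_stD: "1 \<in> st D" using st_ext[OF D_Fbar] D1 by auto

lemma starf_mem: "x \<in> starf D st A \<longleftrightarrow> (\<exists>F. F \<in> fgen D \<and> F \<subseteq> A \<and> x \<in> st F)"
  unfolding starf_def by blast

lemma starf_mono: "A \<subseteq> B \<Longrightarrow> starf D st A \<subseteq> starf D st B"
  unfolding starf_def by blast

lemma starf_le_stD: "A \<subseteq> D \<Longrightarrow> starf D st A \<subseteq> st D"
  unfolding starf_def using st_mono[OF fgen_Fbar D_Fbar] by blast

lemma starf_one:
  assumes A: "A \<subseteq> D" and one: "1 \<in> starf D st A"
  shows "starf D st A = st D"
proof
  show "starf D st A \<subseteq> st D" by (rule starf_le_stD[OF A])
  obtain F where F: "F \<in> fgen D" "F \<subseteq> A" "1 \<in> st F" using one unfolding starf_mem by blast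
  have FB: "F \<in> Fbar D" by (rule fgen_Fbar[OF F(1)])
  have "D \<subseteq> st F"
  proof
    fix d assume "d \<in> D"
    then have "d * 1 \<in> st F" using st_submod[OF FB] F(3) unfolding submod_def by blast
    then show "d \<in> st F" by simp
  qed
  then have "st D \<subseteq> st (st F)" by (rule st_mono[OF D_Fbar st_Fbar[OF FB]])
  also have "\<dots> = st F" by (rule st_idem[OF FB])
  also have "\<dots> \<subseteq> starf D st A" unfolding starf_def using F by blast
  finally show "st D \<subseteq> starf D st A" .
qed

lemma PropEq: "A \<subseteq> D \<Longrightarrow> (starf D st A \<noteq> st D \<longleftrightarrow> 1 \<notin> starf D st A)"
  using starf_one one_stD by auto

lemma fgen_lin: "finite G \<Longrightarrow> g \<in> G \<Longrightarrow> g \<noteq> 0 \<Longrightarrow> lin D G \<in> fgen D"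
  unfolding fgen_def using gen_in_lin[OF D1, of G] by auto

lemma fgen_nz: "F \<in> fgen D \<Longrightarrow> \<exists>f\<in>F. f \<noteq> 0"
  unfolding fgen_def using zero_in_lin by blast

lemma starf_ext:
  assumes A: "submod D A" and a0: "a0 \<in> A" "a0 \<noteq> 0"
  shows "A \<subseteq> starf D st A"
proof
  fix a assume a: "a \<in> A"
  let ?F = "lin D {a, a0}"
  have F: "?F \<in> fgen D" by (rule fgen_lin[of _ a0]) (use a0 in auto)
  have "?F \<subseteq> A" by (rule lin_least[OF A]) (use a a0 in auto)
  moreover have "a \<in> st ?F" using gen_in_lin[OF D1, of "{a, a0}"] st_ext[OF fgen_Fbar[OF F]] by auto
  ultimately show "a \<in> starf D st A" unfolding starf_mem using F by blast
qed

lemma UBfin: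
  assumes A: "submod D A" and a0: "a0 \<in> A" "a0 \<noteq> 0" and G: "finite G" "G \<subseteq> starf D st A"
  shows "\<exists>F'. F' \<in> fgen D \<and> F' \<subseteq> A \<and> G \<subseteq> st F'"
  using G
proof (induction G rule: finite_induct)
  case empty
  have "lin D {a0} \<in> fgen D" by (rule fgen_lin[of _ a0]) (use a0 in auto)
  moreover have "lin D {a0} \<subseteq> A" by (rule lin_least[OF A]) (use a0 in auto)
  ultimately show ?case by blast
next
  case (insert g G)
  then obtain F' where F': "F' \<in> fgen D" "F' \<subseteq> A" "G \<subseteq> st F'" by auto
  have "g \<in> starf D st A" using insert.prems by auto
  then obtain Fg where Fg: "Fg \<in> fgen D" "Fg \<subseteq> A" "g \<in> st Fg" unfolding starf_mem by blast
  obtain G1 where G1: "finite G1" "Fg = lin D G1" using Fg(1) unfolding fgen_def by blast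
  obtain G2 where G2: "finite G2" "F' = lin D G2" using F'(1) unfolding fgen_def by blast
  let ?F = "lin D (G1 \<union> G2)"
  have s1: "Fg \<subseteq> ?F" unfolding G1(2) by (rule lin_mono) auto
  have s2: "F' \<subseteq> ?F" unfolding G2(2) by (rule lin_mono) auto
  obtain f where f: "f \<in> Fg" "f \<noteq> 0" using fgen_nz[OF Fg(1)] by blast
  have "?F \<noteq> {0}" using s1 f by auto
  then have F: "?F \<in> fgen D" unfolding fgen_def using G1(1) G2(1) by auto
  have "G1 \<subseteq> A" using gen_in_lin[OF D1, of G1] G1(2) Fg(2) by auto
  moreover have "G2 \<subseteq> A" using gen_in_lin[OF D1, of G2] G2(2) F'(2) by auto
  ultimately have "?F \<subseteq> A" using lin_least[OF A] by auto
  moreover have "st Fg \<subseteq> st ?F" by (rule st_mono[OF fgen_Fbar[OF Fg(1)] fgen_Fbar[OF F] s1])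
  moreover have "st F' \<subseteq> st ?F" by (rule st_mono[OF fgen_Fbar[OF F'(1)] fgen_Fbar[OF F] s2])
  ultimately show ?case using F F'(3) Fg(3) by blast
qed

lemma SF:
  assumes A: "submod D A" and a0: "a0 \<in> A" "a0 \<noteq> 0" and F: "F \<in> fgen D" "F \<subseteq> starf D st A"
  shows "st F \<subseteq> starf D st A"
proof -
  obtain G where G: "finite G" "F = lin D G" using F(1) unfolding fgen_def by blast
  have "G \<subseteq> starf D st A" using gen_in_lin[OF D1, of G] G(2) F(2) by auto
  then obtain F' where F': "F' \<in> fgen D" "F' \<subseteq> A" "G \<subseteq> st F'" using UBfin[OF A a0 G(1)] by blast
  have F'B: "F' \<in> Fbar D" by (rule fgen_Fbar[OF F'(1)])
  have "F \<subseteq> st F'" unfolding G(2) by (rule lin_least[OF st_submod[OF F'B] F'(3)])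
  then have "st F \<subseteq> st (st F')" by (rule st_mono[OF fgen_Fbar[OF F(1)] st_Fbar[OF F'B]])
  also have "\<dots> = st F'" by (rule st_idem[OF F'B])
  also have "\<dots> \<subseteq> starf D st A" unfolding starf_def using F' by blast
  finally show ?thesis .
qed

lemma starf_submod:
  assumes A: "submod D A" and a0: "a0 \<in> A" "a0 \<noteq> 0"
  shows "submod D (starf D st A)"
  unfolding submod_def
proof (intro conjI ballI)
  show "0 \<in> starf D st A" using starf_ext[OF A a0] A unfolding submod_def by blast
  fix x y assume xy: "x \<in> starf D st A" "y \<in> starf D st A"
  then obtain F' where F': "F' \<in> fgen D" "F' \<subseteq> A" "{x, y} \<subseteq> st F'" using UBfin[OF A a0, of "{x, y}"] by auto
  then have "x + y \<in> st F'" using st_submod[OF fgen_Fbar[OF F'(1)]] unfolding submod_def by blast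
  then show "x + y \<in> starf D st A" unfolding starf_mem using F' by blast
next
  fix r x assume "r \<in> D" "x \<in> starf D st A"
  then obtain F where F: "F \<in> fgen D" "F \<subseteq> A" "x \<in> st F" unfolding starf_mem by blast
  then have "r * x \<in> st F" using st_submod[OF fgen_Fbar[OF F(1)]] \<open>r \<in> D\<close> unfolding submod_def by blast
  then show "r * x \<in> starf D st A" unfolding starf_mem using F by blast
qed

lemma F1easy:
  assumes P: "qp P" and A: "A \<subseteq> P"
  shows "1 \<notin> starf D st A"
proof
  assume "1 \<in> starf D st A"
  then have "1 \<in> starf D st P" using starf_mono[OF A] by blast
  then have "1 \<in> P" using qp_props(3)[OF P] D1 by blast
  then show False using qp_props(5)[OF P] by blast
qed


lemma F1hard:
  assumes I: "ideal_of D I" "I \<noteq> {0}" and one: "1 \<notin> starf D st I"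
  shows "\<exists>P. qp P \<and> I \<subseteq> P"
proof -
  define A where "A = {J. ideal_of D J \<and> I \<subseteq> J \<and> 1 \<notin> starf D st J}"
  have "\<exists>M\<in>A. I \<subseteq> M \<and> (\<forall>X\<in>A. M \<subseteq> X \<longrightarrow> X = M)"
  proof (rule zorn_above)
    show "I \<in> A" using I one unfolding A_def by simp
    fix C assume C: "C \<noteq> {}" "C \<subseteq> A" "chain\<^sub>\<subseteq> C"
    have CI: "ideal_of D K" if "K \<in> C" for K using C(2) that unfolding A_def by blast
    then have U: "ideal_of D (\<Union>C)" by (rule chain_ideal[OF C(1,3)])
    have "I \<subseteq> \<Union>C" using C(1,2) unfolding A_def by blast
    moreover have "1 \<notin> starf D st (\<Union>C)"
    proof
      assume "1 \<in> starf D st (\<Union>C)"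
      then obtain F where F: "F \<in> fgen D" "F \<subseteq> \<Union>C" "1 \<in> st F" unfolding starf_mem by blast
      obtain G where G: "finite G" "F = lin D G" using F(1) unfolding fgen_def by blast
      have "G \<subseteq> \<Union>C" using gen_in_lin[OF D1, of G] G(2) F(2) by auto
      then obtain K where K: "K \<in> C" "G \<subseteq> K" using finite_in_chain[OF G(1) _ C(1,3)] by blast
      have "F \<subseteq> K" unfolding G(2) using lin_least[OF _ K(2)] CI[OF K(1)] unfolding ideal_of_def by blast
      then have "1 \<in> starf D st K" unfolding starf_mem using F by blast
      then show False using C(2) K(1) unfolding A_def by blast
    qed
    ultimately show "\<Union>C \<in> A" using U unfolding A_def by blast
  qed
  then obtain M where MA: "M \<in> A" and IM: "I \<subseteq> M" and mx0: "\<forall>X\<in>A. M \<subseteq> X \<longrightarrow> X = M"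
    by (elim bexE conjE)
  have mx: "X = M" if "X \<in> A" "M \<subseteq> X" for X using mx0 that by blast
  have M: "ideal_of D M" "1 \<notin> starf D st M" using MA unfolding A_def by auto
  have Msub: "submod D M" using M(1) unfolding ideal_of_def by blast
  obtain a0 where a0: "a0 \<in> M" "a0 \<noteq> 0" using I(2) IM ideal_props(2)[OF I(1)] by blast
  have Mst: "M \<subseteq> starf D st M" by (rule starf_ext[OF Msub a0])
  have stM: "submod D (starf D st M)" by (rule starf_submod[OF Msub a0])
  have SFM: "st F \<subseteq> starf D st M" if "F \<in> fgen D" "F \<subseteq> starf D st M" for F
    by (rule SF[OF Msub a0 that])
  have eq: "starf D st M \<inter> D = M"
  proof -
    let ?J = "starf D st M \<inter> D"
    have J: "ideal_of D ?J" unfolding ideal_of_def using submod_int[OF stM subring_submod[OF D order_refl]] by blast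
    have MJ: "M \<subseteq> ?J" using Mst ideal_props(1)[OF M(1)] by blast
    have "1 \<notin> starf D st ?J"
    proof
      assume "1 \<in> starf D st ?J"
      then obtain F where F: "F \<in> fgen D" "F \<subseteq> ?J" "1 \<in> st F" unfolding starf_mem by blast
      then have "st F \<subseteq> starf D st M" using SFM by blast
      then show False using F(3) M(2) by blast
    qed
    then have "?J \<in> A" using J MJ IM unfolding A_def by blast
    then show ?thesis using mx MJ by blast
  qed
  have M1: "1 \<notin> M" using Mst M(2) by blast
  have ext: "1 \<in> starf D st {j + x * r | j r. j \<in> M \<and> r \<in> D}" if x: "x \<in> D" "x \<notin> M" for x
  proof (rule ccontr)
    assume n1: "1 \<notin> starf D st {j + x * r | j r. j \<in> M \<and> r \<in> D}"
    note E = ideal_ext[OF D M(1) x(1)]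
    have "{j + x * r | j r. j \<in> M \<and> r \<in> D} \<in> A" using E(1,2) IM n1 unfolding A_def by auto
    then have "{j + x * r | j r. j \<in> M \<and> r \<in> D} = M" using mx E(2) by blast
    then show False using E(3) x(2) by blast
  qed
  have prime: "a \<in> M \<or> b \<in> M" if ab: "a \<in> D" "b \<in> D" "a * b \<in> M" for a b
  proof (rule ccontr)
    assume nab: "\<not> (a \<in> M \<or> b \<in> M)"
    obtain Fa where Fa: "Fa \<in> fgen D" "Fa \<subseteq> {j + a * r | j r. j \<in> M \<and> r \<in> D}" "1 \<in> st Fa"
      using ext[of a] ab nab unfolding starf_mem by blast
    have b0: "b \<noteq> 0" using nab ideal_props(2)[OF M(1)] by blast
    obtain G where G: "finite G" "Fa = lin D G" using Fa(1) unfolding fgen_def by blast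
    let ?bF = "(\<lambda>e. b * e) ` Fa"
    have bFl: "?bF = lin D ((\<lambda>g. b * g) ` G)" unfolding G(2) by (rule lin_scale_image[OF D b0])
    obtain f where f: "f \<in> Fa" "f \<noteq> 0" using fgen_nz[OF Fa(1)] by blast
    have "b * f \<in> ?bF" using f by blast
    moreover have "b * f \<noteq> 0" using f b0 by simp
    ultimately have "?bF \<noteq> {0}" by blast
    then have bF: "?bF \<in> fgen D" unfolding fgen_def using bFl G(1) by auto
    have "?bF \<subseteq> M"
    proof
      fix z assume "z \<in> ?bF"
      then obtain e where e: "e \<in> Fa" "z = b * e" by blast
      then obtain j r where jr: "j \<in> M" "r \<in> D" "e = j + a * r" using Fa(2) by blast
      have "z = b * j + r * (a * b)" using e(2) jr(3) by (simp add: algebra_simps)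
      moreover have "b * j \<in> M" using ideal_props(4)[OF M(1) ab(2) jr(1)] .
      moreover have "r * (a * b) \<in> M" using ideal_props(4)[OF M(1) jr(2) ab(3)] .
      ultimately show "z \<in> M" using ideal_props(3)[OF M(1)] by simp
    qed
    moreover have "b \<in> st ?bF" using st_scale[OF b0 fgen_Fbar[OF Fa(1)]] Fa(3) by force
    ultimately have bst: "b \<in> starf D st M" unfolding starf_mem using bF by blast
    have Eb: "{j + b * r | j r. j \<in> M \<and> r \<in> D} \<subseteq> starf D st M"
    proof
      fix z assume "z \<in> {j + b * r | j r. j \<in> M \<and> r \<in> D}"
      then obtain j r where jr: "j \<in> M" "r \<in> D" "z = j + b * r" by blast
      have "r * b \<in> starf D st M" using stM jr(2) bst unfolding submod_def by blast
      moreover have "j \<in> starf D st M" using Mst jr(1) by blast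
      ultimately show "z \<in> starf D st M" using stM jr(3) unfolding submod_def by (simp add: mult.commute)
    qed
    obtain Fb where Fb: "Fb \<in> fgen D" "Fb \<subseteq> {j + b * r | j r. j \<in> M \<and> r \<in> D}" "1 \<in> st Fb"
      using ext[of b] ab nab unfolding starf_mem by blast
    have "st Fb \<subseteq> starf D st M" using SFM[OF Fb(1)] Fb(2) Eb by blast
    then show False using Fb(3) M(2) by blast
  qed
  have "prime_ideal_of D M" unfolding prime_ideal_of_def using M(1) M1 D1 prime by blast
  moreover have "M \<noteq> {0}" using a0 by blast
  ultimately have "qp M" unfolding quasi_prime_def using eq by blast
  then show ?thesis using IM by blast
qed

lemma F2:
  assumes J: "ideal_of T J" "J \<noteq> {0}"
  shows "starf D st (J \<inter> D) \<noteq> st D \<longleftrightarrow> (\<exists>P. qp P \<and> J \<inter> D \<subseteq> P)"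
proof -
  have JD: "ideal_of D (J \<inter> D)" by (rule ideal_cap_D[OF J(1)])
  have nz: "J \<inter> D \<noteq> {0}" using NZ[OF J] by blast
  show ?thesis
  proof
    assume "starf D st (J \<inter> D) \<noteq> st D"
    then have "1 \<notin> starf D st (J \<inter> D)" using PropEq[of "J \<inter> D"] by blast
    then show "\<exists>P. qp P \<and> J \<inter> D \<subseteq> P" using F1hard[OF JD nz] by blast
  next
    assume "\<exists>P. qp P \<and> J \<inter> D \<subseteq> P"
    then have "1 \<notin> starf D st (J \<inter> D)" using F1easy by blast
    then show "starf D st (J \<inter> D) \<noteq> st D" using PropEq[of "J \<inter> D"] by blast
  qed
qed

definition Rel where
  "Rel Q \<longleftrightarrow> prime_ideal_of T Q \<and> Q \<noteq> {0} \<and> starf D st (Q \<inter> D) \<noteq> st D"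

lemma Rel_P: "Rel Q \<Longrightarrow> \<exists>P. qp P \<and> Q \<inter> D \<subseteq> P"
  unfolding Rel_def using F2 prime_props(1) by blast

lemma Rel_intro: "prime_ideal_of T Q \<Longrightarrow> Q \<noteq> {0} \<Longrightarrow> qp P \<Longrightarrow> Q \<inter> D \<subseteq> P \<Longrightarrow> Rel Q"
  unfolding Rel_def using F2 prime_props(1) by blast

lemma ideal_prime_T: "prime_ideal_of T Q \<Longrightarrow> ideal_of T Q" using prime_props(1) .

lemma F6:
  assumes I: "ideal_of T I" "I \<noteq> {0}" and one: "1 \<notin> starf D st (I \<inter> D)"
  shows "\<exists>N. max_prop_prime D st T N \<and> I \<subseteq> N"
proof -
  define A where "A = {J. ideal_of T J \<and> I \<subseteq> J \<and> 1 \<notin> starf D st (J \<inter> D)}"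
  have "\<exists>M\<in>A. I \<subseteq> M \<and> (\<forall>X\<in>A. M \<subseteq> X \<longrightarrow> X = M)"
  proof (rule zorn_above)
    show "I \<in> A" using I one unfolding A_def by simp
    fix C assume C: "C \<noteq> {}" "C \<subseteq> A" "chain\<^sub>\<subseteq> C"
    have CI: "ideal_of T K" if "K \<in> C" for K using C(2) that unfolding A_def by blast
    then have U: "ideal_of T (\<Union>C)" by (rule chain_ideal[OF C(1,3)])
    have "I \<subseteq> \<Union>C" using C(1,2) unfolding A_def by blast
    moreover have "1 \<notin> starf D st (\<Union>C \<inter> D)"
    proof
      assume "1 \<in> starf D st (\<Union>C \<inter> D)"
      then obtain F where F: "F \<in> fgen D" "F \<subseteq> \<Union>C \<inter> D" "1 \<in> st F" unfolding starf_mem by blast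
      obtain G where G: "finite G" "F = lin D G" using F(1) unfolding fgen_def by blast
      have GF: "G \<subseteq> F" using gen_in_lin[OF D1, of G] G(2) by auto
      then have "G \<subseteq> \<Union>C" using F(2) by auto
      then obtain K where K: "K \<in> C" "G \<subseteq> K" using finite_in_chain[OF G(1) _ C(1,3)] by blast
      have "ideal_of D (K \<inter> D)" by (rule ideal_cap_D[OF CI[OF K(1)]])
      moreover have "G \<subseteq> K \<inter> D" using K(2) GF F(2) by auto
      ultimately have "F \<subseteq> K \<inter> D" unfolding G(2) using lin_least unfolding ideal_of_def by blast
      then have "1 \<in> starf D st (K \<inter> D)" unfolding starf_mem using F by blast
      then show False using C(2) K(1) unfolding A_def by blast
    qed
    ultimately show "\<Union>C \<in> A" using U unfolding A_def by blast
  qed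
  then obtain N where NA: "N \<in> A" and IN: "I \<subseteq> N" and mx0: "\<forall>X\<in>A. N \<subseteq> X \<longrightarrow> X = N"
    by (elim bexE conjE)
  have mx: "X = N" if "X \<in> A" "N \<subseteq> X" for X using mx0 that by blast
  have N: "ideal_of T N" "1 \<notin> starf D st (N \<inter> D)" using NA unfolding A_def by auto
  have N0: "N \<noteq> {0}" using I(2) IN ideal_props(2)[OF I(1)] by blast
  have NDD: "N \<inter> D \<subseteq> D" by blast
  have Nprop: "starf D st (N \<inter> D) \<noteq> st D" using PropEq[OF NDD] N(2) by blast
  obtain P0 where P0: "qp P0" "N \<inter> D \<subseteq> P0" using F2[OF N(1) N0] Nprop by blast
  have NT: "N \<noteq> T"
  proof
    assume "N = T"
    then have "N \<inter> D = D" using DT by blast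
    then show False using Nprop starf_one[of D] D1 starf_ext[OF subring_submod[OF D order_refl] D1] by auto
  qed
  have ex: "\<exists>n t. n \<in> N \<and> t \<in> T \<and> n + x * t \<in> D - P0" if x: "x \<in> T" "x \<notin> N" for x
  proof -
    define E where "E = {j + x * r | j r. j \<in> N \<and> r \<in> T}"
    note E = ideal_ext[OF T N(1) x(1), folded E_def]
    have "E \<noteq> N" using E(3) x(2) by auto
    then have "E \<notin> A" using mx[OF _ E(2)] by auto
    then have "1 \<in> starf D st (E \<inter> D)" using E(1,2) IN unfolding A_def by auto
    then have "\<not> (E \<inter> D \<subseteq> P0)" using F1easy[OF P0(1)] by blast
    then obtain z where "z \<in> E" "z \<in> D" "z \<notin> P0" by auto
    then obtain j r where "j \<in> N" "r \<in> T" "z = j + x * r" unfolding E_def by auto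
    then show ?thesis using \<open>z \<in> D\<close> \<open>z \<notin> P0\<close> by auto
  qed
  have prime: "a \<in> N \<or> b \<in> N" if ab: "a \<in> T" "b \<in> T" "a * b \<in> N" for a b
  proof (rule ccontr)
    assume nab: "\<not> (a \<in> N \<or> b \<in> N)"
    obtain q1 t1 where 1: "q1 \<in> N" "t1 \<in> T" "q1 + a * t1 \<in> D - P0" using ex[of a] ab nab by auto
    obtain q2 t2 where 2: "q2 \<in> N" "t2 \<in> T" "q2 + b * t2 \<in> D - P0" using ex[of b] ab nab by auto
    have eq: "(q1 + a * t1) * (q2 + b * t2) = (q2 + b * t2) * q1 + (a * t1) * q2 + (t1 * t2) * (a * b)"
      by (simp add: algebra_simps)
    have "q2 + b * t2 \<in> T" using 2(3) DT by blast
    then have i1: "(q2 + b * t2) * q1 \<in> N" using ideal_props(4)[OF N(1)] 1(1) by blast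
    have "a * t1 \<in> T" using Tmul ab(1) 1(2) by blast
    then have i2: "(a * t1) * q2 \<in> N" using ideal_props(4)[OF N(1)] 2(1) by blast
    have "t1 * t2 \<in> T" using Tmul 1(2) 2(2) by blast
    then have i3: "(t1 * t2) * (a * b) \<in> N" using ideal_props(4)[OF N(1)] ab(3) by blast
    have "(q1 + a * t1) * (q2 + b * t2) \<in> N" unfolding eq
      using ideal_props(3)[OF N(1) ideal_props(3)[OF N(1) i1 i2] i3] .
    moreover have "(q1 + a * t1) * (q2 + b * t2) \<in> D - P0"
      using msubD(4)[OF qp_props(8)[OF P0(1)] 1(3) 2(3)] .
    ultimately show False using P0(2) by auto
  qed
  have "prime_ideal_of T N" unfolding prime_ideal_of_def using N(1) NT prime by blast
  moreover have "\<forall>J. ideal_of T J \<and> N \<subseteq> J \<and> starf D st (J \<inter> D) \<noteq> st D \<longrightarrow> J = N"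
  proof (intro allI impI)
    fix J assume J: "ideal_of T J \<and> N \<subseteq> J \<and> starf D st (J \<inter> D) \<noteq> st D"
    have JDD: "J \<inter> D \<subseteq> D" by blast
    have "1 \<notin> starf D st (J \<inter> D)" using J PropEq[OF JDD] by blast
    then have "J \<in> A" using J IN unfolding A_def by blast
    then show "J = N" using mx J by blast
  qed
  ultimately have "max_prop_prime D st T N" unfolding max_prop_prime_def using N0 Nprop by blast
  then show ?thesis using IN by blast
qed

lemma max_Rel: "max_prop_prime D st T N \<Longrightarrow> Rel N"
  unfolding max_prop_prime_def Rel_def by blast

abbreviation ll where "ll \<equiv> ell D st T"

lemma ell_mem: "x \<in> ell D st T E \<longleftrightarrow> (\<forall>P. qp P \<longrightarrow> x \<in> lin (loc T (D - P)) E)"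
  unfolding ell_def by blast

lemma lin_TP: "qp P \<Longrightarrow> lin (loc T (D - P)) T = loc T (D - P)"
  by (rule LT[OF T qp_props(7) order_refl, of P 1]) (use qp_props(5) D1 T1 in auto)

lemma ellT_mem: "x \<in> ll T \<longleftrightarrow> (\<forall>P. qp P \<longrightarrow> x \<in> loc T (D - P))"
  unfolding ell_mem using lin_TP by auto

lemma ell_cong:
  assumes "\<And>P. qp P \<Longrightarrow> lin (loc T (D - P)) E = lin (loc T (D - P)) E'"
  shows "ll E = ll E'"
  unfolding set_eq_iff ell_mem using assms by auto

lemma T_sub_loc: "qp P \<Longrightarrow> T \<subseteq> loc T (D - P)"
  using loc_sup[of "D - P" T] qp_props(5) D1 by auto

lemma T_sub_ellT: "T \<subseteq> ll T"
proof
  fix x assume "x \<in> T"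
  then show "x \<in> ll T" unfolding ellT_mem using T_sub_loc by blast
qed

lemma lin_T_sub: "E \<subseteq> T \<Longrightarrow> lin T E \<subseteq> T"
  by (rule lin_least[OF subring_submod[OF T order_refl]])

lemma lin_T_submod: "submod T (lin T E)" by (rule lin_submod[OF T])


lemma F5:
  assumes Q: "prime_ideal_of T Q"
  shows "loc D (D - (Q \<inter> D)) = loc T (T - Q) \<longleftrightarrow> T \<subseteq> loc D (D - (Q \<inter> D))"
proof
  assume "loc D (D - (Q \<inter> D)) = loc T (T - Q)"
  then show "T \<subseteq> loc D (D - (Q \<inter> D))" using loc_sup[of "T - Q" T] prime_props(3)[OF Q] T1 by auto
next
  assume TL0: "T \<subseteq> loc D (D - (Q \<inter> D))"
  have eqS: "D - (Q \<inter> D) = D - Q" by blast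
  have TL: "T \<subseteq> loc D (D - Q)" using TL0 unfolding eqS .
  note M = msub_DQ[OF Q]
  note liD = loc_iff[OF msubD(3)[OF M(2)]]
  note liT = loc_iff[OF msubD(3)[OF M(3)]]
  show "loc D (D - (Q \<inter> D)) = loc T (T - Q)" unfolding eqS
  proof
    show "loc D (D - Q) \<subseteq> loc T (T - Q)" by (rule loc_mono) (use DT in auto)
    show "loc T (T - Q) \<subseteq> loc D (D - Q)"
    proof
      fix x assume "x \<in> loc T (T - Q)"
      then obtain u where u: "u \<in> T - Q" "u * x \<in> T" unfolding liT by blast
      have "u * x \<in> loc D (D - Q)" using TL u(2) by blast
      then obtain s where s: "s \<in> D - Q" "s * (u * x) \<in> D" unfolding liD by blast
      have "u \<in> loc D (D - Q)" using TL u(1) by blast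
      then obtain s' where s': "s' \<in> D - Q" "s' * u \<in> D" unfolding liD by blast
      have "s' * u \<notin> Q" using prime_props(6)[OF Q, of s' u] s'(1) u(1) DT by auto
      then have "s' * u \<in> D - Q" using s'(2) by blast
      then have sig: "s * (s' * u) \<in> D - Q" using msubD(4)[OF M(2) s(1)] by blast
      have "(s * (s' * u)) * x = s' * (s * (u * x))" by (simp add: algebra_simps)
      moreover have "s' * (s * (u * x)) \<in> D" using Dmul s'(1) s(2) by blast
      ultimately show "x \<in> loc D (D - Q)" unfolding liD using sig by metis
    qed
  qed
qed

lemma F3: "quasi_prime T (starf T ll) Q \<longleftrightarrow> Rel Q"
proof
  assume qpQ: "quasi_prime T (starf T ll) Q"
  then have Q: "prime_ideal_of T Q" "Q \<noteq> {0}" "starf T ll Q \<inter> T = Q" unfolding quasi_prime_def by auto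
  have Qsub: "submod T Q" using prime_props(1)[OF Q(1)] unfolding ideal_of_def by blast
  have "starf D st (Q \<inter> D) \<noteq> st D"
  proof
    assume eq: "starf D st (Q \<inter> D) = st D"
    then have "1 \<in> starf D st (Q \<inter> D)" using one_stD by simp
    then obtain F0 where F0: "F0 \<in> fgen D" "F0 \<subseteq> Q \<inter> D" "1 \<in> st F0" unfolding starf_mem by blast
    obtain G where G: "finite G" "F0 = lin D G" using F0(1) unfolding fgen_def by blast
    have GF0: "G \<subseteq> F0" using gen_in_lin[OF D1, of G] G(2) by auto
    obtain f where f: "f \<in> F0" "f \<noteq> 0" using fgen_nz[OF F0(1)] by blast
    have "\<exists>g\<in>G. g \<noteq> 0"
    proof (rule ccontr)
      assume "\<not> (\<exists>g\<in>G. g \<noteq> 0)" then have G0: "G \<subseteq> {0}" by auto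
      have "submod D {0}" unfolding submod_def by simp
      then have "F0 \<subseteq> {0}" unfolding G(2) using lin_least G0 by blast
      then show False using f by blast
    qed
    then obtain g0 where g0: "g0 \<in> G" "g0 \<noteq> 0" by blast
    let ?F = "lin T G"
    have FT: "?F \<in> fgen T" unfolding fgen_def using G(1) gen_in_lin[OF T1, of G] g0 by auto
    have FQ: "?F \<subseteq> Q" by (rule lin_least[OF Qsub]) (use GF0 F0(2) in blast)
    have "1 \<in> ll ?F"
      unfolding ell_mem
    proof (intro allI impI)
      fix P assume P: "qp P"
      have PD: "submod D P" using prime_props(1)[OF qp_props(1)[OF P]] unfolding ideal_of_def by blast
      have "\<not> G \<subseteq> P"
      proof
        assume "G \<subseteq> P"
        then have "F0 \<subseteq> P" unfolding G(2) using lin_least[OF PD] by blast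
        then have "st F0 \<subseteq> starf D st P" unfolding starf_def using F0(1) by blast
        then have "1 \<in> P" using F0(3) qp_props(3)[OF P] D1 by blast
        then show False using qp_props(5)[OF P] by blast
      qed
      then obtain g where g: "g \<in> G" "g \<notin> P" by blast
      have gD: "g \<in> D" using g(1) GF0 F0(2) by blast
      have gnz: "g \<noteq> 0" using g(2) qp_props(4)[OF P] by blast
      have "1 / g \<in> loc T (D - P)" unfolding loc_iff[OF msubD(3)[OF qp_props(7)[OF P]]]
        using g gD gnz T1 by (intro bexI[of _ g]) auto
      moreover have "g \<in> ?F" using g(1) gen_in_lin[OF T1, of G] by blast
      ultimately have "(1 / g) * g \<in> lin (loc T (D - P)) ?F" by (rule lin_scal_gen)
      then show "1 \<in> lin (loc T (D - P)) ?F" using gnz by simp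
    qed
    then have "1 \<in> starf T ll Q" unfolding starf_def using FT FQ by blast
    then have "1 \<in> Q" using Q(3) T1 by blast
    then show False using prime_props(3)[OF Q(1)] by blast
  qed
  then show "Rel Q" unfolding Rel_def using Q by blast
next
  assume R: "Rel Q"
  then have Q: "prime_ideal_of T Q" "Q \<noteq> {0}" unfolding Rel_def by auto
  obtain P where P: "qp P" "Q \<inter> D \<subseteq> P" using Rel_P[OF R] by blast
  have Qsub: "submod T Q" using prime_props(1)[OF Q(1)] unfolding ideal_of_def by blast
  have "starf T ll Q \<inter> T = Q"
  proof
    show "starf T ll Q \<inter> T \<subseteq> Q"
    proof
      fix z assume z: "z \<in> starf T ll Q \<inter> T"
      then obtain F where F: "F \<in> fgen T" "F \<subseteq> Q" "z \<in> ll F" unfolding starf_def by blast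
      have "z \<in> lin (loc T (D - P)) F" using F(3) P(1) unfolding ell_mem by blast
      moreover have "\<exists>s\<in>D - P. s * a \<in> Q" if "a \<in> F" for a
        using that F(2) D1 qp_props(5)[OF P(1)] by (intro bexI[of _ 1]) auto
      ultimately obtain s where s: "s \<in> D - P" "s * z \<in> Q"
        using G1[OF T qp_props(7)[OF P(1)] Qsub] by blast
      have "s \<notin> Q" using s(1) P(2) by blast
      then show "z \<in> Q" using prime_props(6)[OF Q(1), of s z] s z DT by auto
    qed
    show "Q \<subseteq> starf T ll Q \<inter> T"
    proof
      fix q assume q: "q \<in> Q"
      obtain q0 where q0: "q0 \<in> Q" "q0 \<noteq> 0" using Q(2) prime_props(4)[OF Q(1)] by blast
      let ?F = "lin T {q, q0}"
      have "?F \<noteq> {0}" using gen_in_lin[OF T1, of "{q, q0}"] q0 by auto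
      moreover have "finite {q, q0}" by simp
      ultimately have F: "?F \<in> fgen T" unfolding fgen_def by blast
      have "?F \<subseteq> Q" by (rule lin_least[OF Qsub]) (use q q0 in auto)
      moreover have "q \<in> ll ?F" unfolding ell_mem
      proof (intro allI impI)
        fix P' assume P': "qp P'"
        have "q \<in> ?F" using gen_in_lin[OF T1, of "{q, q0}"] by auto
        then show "q \<in> lin (loc T (D - P')) ?F"
          using gen_in_lin[OF subringD(2)[OF qp_props(9)[OF P']], of ?F] by blast
      qed
      ultimately show "q \<in> starf T ll Q \<inter> T" unfolding starf_def using F q prime_props(5)[OF Q(1)] by blast
    qed
  qed
  then show "quasi_prime T (starf T ll) Q" unfolding quasi_prime_def using Q by blast
qed

lemma F4: "linked D st T ll"
  unfolding linked_def
proof (intro allI impI)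
  fix F assume F: "ideal_of D F \<and> F \<in> fgen D \<and> st F = st D"
  show "ll (lin T F) = ll T"
  proof (rule ell_cong)
    fix P assume P: "qp P"
    have "\<not> F \<subseteq> P"
    proof
      assume "F \<subseteq> P"
      then have "st F \<subseteq> starf D st P" unfolding starf_def using F by blast
      then have "1 \<in> P" using F one_stD qp_props(3)[OF P] D1 by blast
      then show False using qp_props(5)[OF P] by blast
    qed
    then obtain f where f: "f \<in> F" "f \<notin> P" by blast
    have FD: "F \<subseteq> D" using F ideal_props(1) by blast
    have FT: "lin T F \<subseteq> T" by (rule lin_T_sub) (use FD DT in blast)
    have "f \<in> lin T F" using gen_in_lin[OF T1, of F] f(1) by blast
    then have "lin (loc T (D - P)) (lin T F) = loc T (D - P)"
      by (intro LT[OF T qp_props(7)[OF P] FT, of f]) (use f FD in auto)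
    then show "lin (loc T (D - P)) (lin T F) = lin (loc T (D - P)) T" using lin_TP[OF P] by simp
  qed
qed

definition V where
  "V \<longleftrightarrow> (\<forall>Q. prime_ideal_of T Q \<and> Q \<noteq> {0} \<and> starf D st (Q \<inter> D) \<noteq> st D \<longrightarrow>
           loc D (D - (Q \<inter> D)) = loc T (T - Q))"

lemma V_Rel: "V \<longleftrightarrow> (\<forall>Q. Rel Q \<longrightarrow> loc D (D - (Q \<inter> D)) = loc T (T - Q))"
  unfolding V_def Rel_def by blast

lemma VC: "V \<longleftrightarrow> (\<forall>Q. Rel Q \<longrightarrow> T \<subseteq> loc D (D - (Q \<inter> D)))"
  unfolding V_Rel using F5 unfolding Rel_def by blast

lemma i_iff: "flat_st D st T ll \<longleftrightarrow> V"
  unfolding flat_st_def V_Rel using F3 F4 by auto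


lemma eqDQ: "D - (Q \<inter> D) = D - Q" by blast

lemma v_vi: "V \<longleftrightarrow> (\<forall>N. max_prop_prime D st T N \<longrightarrow> loc D (D - (N \<inter> D)) = loc T (T - N))"
proof
  assume V: V
  show "\<forall>N. max_prop_prime D st T N \<longrightarrow> loc D (D - (N \<inter> D)) = loc T (T - N)"
    using V unfolding V_Rel using max_Rel by blast
next
  assume H: "\<forall>N. max_prop_prime D st T N \<longrightarrow> loc D (D - (N \<inter> D)) = loc T (T - N)"
  show V unfolding VC
  proof (intro allI impI)
    fix Q assume R: "Rel Q"
    have Q: "prime_ideal_of T Q" "Q \<noteq> {0}" "starf D st (Q \<inter> D) \<noteq> st D" using R unfolding Rel_def by auto
    have QDD: "Q \<inter> D \<subseteq> D" by blast
    have "1 \<notin> starf D st (Q \<inter> D)" using Q(3) PropEq[OF QDD] by blast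
    then obtain N where N: "max_prop_prime D st T N" "Q \<subseteq> N"
      using F6[OF prime_props(1)[OF Q(1)] Q(2)] by blast
    have NP: "prime_ideal_of T N" using N(1) unfolding max_prop_prime_def by blast
    have "T \<subseteq> loc D (D - (N \<inter> D))" using H N(1) F5[OF NP] by blast
    moreover have "loc D (D - (N \<inter> D)) \<subseteq> loc D (D - (Q \<inter> D))" by (rule loc_mono) (use N(2) in auto)
    ultimately show "T \<subseteq> loc D (D - (Q \<inter> D))" by blast
  qed
qed

lemma L2: "ll T = \<Inter>{loc T (T - N) | N. max_prop_prime D st T N}"
proof -
  have A: "x \<in> loc T (T - N)" if x: "x \<in> ll T" and N: "max_prop_prime D st T N" for x N
  proof -
    obtain P where P: "qp P" "N \<inter> D \<subseteq> P" using Rel_P[OF max_Rel[OF N]] by blast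
    have "x \<in> loc T (D - P)" using x P(1) unfolding ellT_mem by blast
    moreover have "loc T (D - P) \<subseteq> loc T (T - N)" by (rule loc_mono) (use P(2) DT in auto)
    ultimately show ?thesis by blast
  qed
  have B: "x \<in> ll T" if H: "\<And>N. max_prop_prime D st T N \<Longrightarrow> x \<in> loc T (T - N)" for x
    unfolding ellT_mem
  proof (intro allI impI)
    fix P assume P: "qp P"
    note li = loc_iff[OF msubD(3)[OF qp_props(7)[OF P]]]
    show "x \<in> loc T (D - P)"
    proof (rule ccontr)
      assume nx: "x \<notin> loc T (D - P)"
      define I where "I = {t\<in>T. t * x \<in> T}"
      have I: "ideal_of T I" unfolding ideal_of_def submod_def I_def
      proof (intro conjI ballI subsetI)
        show "0 \<in> {t \<in> T. t * x \<in> T}" using T0 by simp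
        show "z \<in> T" if "z \<in> {t \<in> T. t * x \<in> T}" for z using that by blast
        show "a + b \<in> {t \<in> T. t * x \<in> T}" if "a \<in> {t \<in> T. t * x \<in> T}" "b \<in> {t \<in> T. t * x \<in> T}" for a b
          using that Tadd by (simp add: distrib_right)
        show "r * a \<in> {t \<in> T. t * x \<in> T}" if "r \<in> T" "a \<in> {t \<in> T. t * x \<in> T}" for r a
          using that Tmul by (simp add: mult.assoc)
      qed
      have ID: "I \<inter> D \<subseteq> P"
      proof
        fix d assume d: "d \<in> I \<inter> D"
        show "d \<in> P"
        proof (rule ccontr)
          assume "d \<notin> P"
          then have "x \<in> loc T (D - P)" unfolding li using d unfolding I_def by blast
          then show False using nx by blast
        qed
      qed
      obtain b where b: "b \<in> D" "b \<noteq> 0" "b * x \<in> D" using den by blast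
      have "b \<in> I" unfolding I_def using b DT by blast
      then have I0: "I \<noteq> {0}" using b(2) by blast
      have "1 \<notin> starf D st (I \<inter> D)" by (rule F1easy[OF P ID])
      then obtain N where N: "max_prop_prime D st T N" "I \<subseteq> N" using F6[OF I I0] by blast
      have NP: "prime_ideal_of T N" using N(1) unfolding max_prop_prime_def by blast
      have "x \<in> loc T (T - N)" using H N(1) by blast
      then obtain u where u: "u \<in> T - N" "u * x \<in> T" unfolding loc_iff[OF msubD(3)[OF msub_DQ(3)[OF NP]]] by blast
      then have "u \<in> I" unfolding I_def by blast
      then show False using u(1) N(2) by blast
    qed
  qed
  show ?thesis
  proof (rule set_eqI)
    fix x
    show "x \<in> ll T \<longleftrightarrow> x \<in> \<Inter>{loc T (T - N) | N. max_prop_prime D st T N}"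
    proof
      assume "x \<in> ll T" then show "x \<in> \<Inter>{loc T (T - N) | N. max_prop_prime D st T N}" using A by blast
    next
      assume "x \<in> \<Inter>{loc T (T - N) | N. max_prop_prime D st T N}"
      then have "\<And>N. max_prop_prime D st T N \<Longrightarrow> x \<in> loc T (T - N)" by blast
      then show "x \<in> ll T" by (rule B)
    qed
  qed
qed

lemma setcompr_cong: assumes "\<And>N. P N \<Longrightarrow> f N = g N" shows "{f N | N. P N} = {g N | N. P N}"
  using assms by force

lemma v_iv: "V \<longleftrightarrow> ll T = \<Inter>{loc D (D - (N \<inter> D)) | N. max_prop_prime D st T N}"
proof
  assume V
  then have "\<And>N. max_prop_prime D st T N \<Longrightarrow> loc D (D - (N \<inter> D)) = loc T (T - N)" using v_vi by blast
  then have "{loc D (D - (N \<inter> D)) | N. max_prop_prime D st T N} = {loc T (T - N) | N. max_prop_prime D st T N}"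
    by (rule setcompr_cong)
  then show "ll T = \<Inter>{loc D (D - (N \<inter> D)) | N. max_prop_prime D st T N}" using L2 by simp
next
  assume H: "ll T = \<Inter>{loc D (D - (N \<inter> D)) | N. max_prop_prime D st T N}"
  show V
  proof (rule v_vi[THEN iffD2], intro allI impI)
    fix N assume N: "max_prop_prime D st T N"
    have NP: "prime_ideal_of T N" using N unfolding max_prop_prime_def by blast
    have "loc D (D - (N \<inter> D)) \<in> {loc D (D - (N \<inter> D)) | N. max_prop_prime D st T N}" using N by blast
    then have "ll T \<subseteq> loc D (D - (N \<inter> D))" unfolding H by (rule Inter_lower)
    then have "T \<subseteq> loc D (D - (N \<inter> D))" using T_sub_ellT by blast
    then show "loc D (D - (N \<inter> D)) = loc T (T - N)" using F5[OF NP] by blast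
  qed
qed

lemma F8:
  assumes V: V and P: "qp P" and X: "finite X" "X \<subseteq> T"
  shows "\<exists>s\<in>D - P. s \<in> lin T {d\<in>D. \<forall>x\<in>X. d * x \<in> D}"
proof (rule ccontr)
  define I where "I = {d\<in>D. \<forall>x\<in>X. d * x \<in> D}"
  assume "\<not> (\<exists>s\<in>D - P. s \<in> lin T {d\<in>D. \<forall>x\<in>X. d * x \<in> D})"
  then have disj: "lin T I \<inter> (D - P) = {}" unfolding I_def by blast
  have ID: "I \<subseteq> D" unfolding I_def by blast
  have J: "ideal_of T (lin T I)" unfolding ideal_of_def using lin_T_submod lin_T_sub[of I] ID DT by blast
  obtain Q where Q: "prime_ideal_of T Q" "lin T I \<subseteq> Q" "Q \<inter> (D - P) = {}"
    using prime_avoid[OF T J qp_props(7)[OF P] disj] by blast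
  have IQ: "I \<subseteq> Q" using gen_in_lin[OF T1, of I] Q(2) by blast
  have msub0: "msub (D - {0}) D" unfolding msub_def using D1 Dmul by auto
  have "\<forall>x\<in>X. \<exists>s\<in>D - {0}. s * x \<in> D" using den by blast
  then obtain b where b: "b \<in> D - {0}" "\<forall>x\<in>X. b * x \<in> D" using common_denom[OF D msub0 X(1)] by blast
  have "b \<in> I" unfolding I_def using b by blast
  then have Q0: "Q \<noteq> {0}" using IQ b(1) by blast
  have QP: "Q \<inter> D \<subseteq> P" using Q(3) by blast
  have "Rel Q" by (rule Rel_intro[OF Q(1) Q0 P QP])
  then have TL: "T \<subseteq> loc D (D - Q)" using V unfolding VC eqDQ by blast
  note liD = loc_iff[OF msubD(3)[OF msub_DQ(2)[OF Q(1)]]]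
  have "\<forall>x\<in>X. \<exists>s\<in>D - Q. s * x \<in> D"
  proof
    fix x assume "x \<in> X"
    then have "x \<in> loc D (D - Q)" using TL X(2) by blast
    then show "\<exists>s\<in>D - Q. s * x \<in> D" unfolding liD .
  qed
  then obtain s where s: "s \<in> D - Q" "\<forall>x\<in>X. s * x \<in> D" using common_denom[OF D msub_DQ(2)[OF Q(1)] X(1)] by blast
  then have "s \<in> I" unfolding I_def by blast
  then show False using IQ s(1) by blast
qed

lemma Klem:
  assumes R: "Rel Q" and QP: "Q \<inter> D \<subseteq> P" and x: "x \<in> T" and s: "s \<in> D - P" "s \<in> lin T {d\<in>D. d * x \<in> D}"
  shows "x \<in> loc D (D - (Q \<inter> D))"
proof -
  have Q: "prime_ideal_of T Q" using R unfolding Rel_def by blast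
  have Qsub: "submod T Q" using prime_props(1)[OF Q] unfolding ideal_of_def by blast
  have "\<not> {d\<in>D. d * x \<in> D} \<subseteq> Q"
  proof
    assume "{d\<in>D. d * x \<in> D} \<subseteq> Q"
    then have "lin T {d\<in>D. d * x \<in> D} \<subseteq> Q" by (rule lin_least[OF Qsub])
    then show False using s QP by blast
  qed
  then obtain d where d: "d \<in> D" "d * x \<in> D" "d \<notin> Q" by blast
  then show ?thesis unfolding eqDQ loc_iff[OF msubD(3)[OF msub_DQ(2)[OF Q]]] by blast
qed

lemma v_iii: "V \<longleftrightarrow> (\<forall>x\<in>T. x \<noteq> 0 \<longrightarrow> ll (lin T {d\<in>D. d * x \<in> D}) = ll T)"
proof
  assume V: V
  show "\<forall>x\<in>T. x \<noteq> 0 \<longrightarrow> ll (lin T {d\<in>D. d * x \<in> D}) = ll T"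
  proof (intro ballI impI)
    fix x assume x: "x \<in> T" "x \<noteq> 0"
    show "ll (lin T {d\<in>D. d * x \<in> D}) = ll T"
    proof (rule ell_cong)
      fix P assume P: "qp P"
      obtain s where s: "s \<in> D - P" "s \<in> lin T {d\<in>D. \<forall>y\<in>{x}. d * y \<in> D}" using F8[OF V P, of "{x}"] x by blast
      have s': "s \<in> lin T {d\<in>D. d * x \<in> D}" using s(2) by simp
      have sub: "lin T {d\<in>D. d * x \<in> D} \<subseteq> T" by (rule lin_T_sub) (use DT in blast)
      have "lin (loc T (D - P)) (lin T {d\<in>D. d * x \<in> D}) = loc T (D - P)"
        by (rule LT[OF T qp_props(7)[OF P] sub s(1) s'])
      then show "lin (loc T (D - P)) (lin T {d\<in>D. d * x \<in> D}) = lin (loc T (D - P)) T" using lin_TP[OF P] by simp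
    qed
  qed
next
  assume H: "\<forall>x\<in>T. x \<noteq> 0 \<longrightarrow> ll (lin T {d\<in>D. d * x \<in> D}) = ll T"
  show V unfolding VC
  proof (intro allI impI subsetI)
    fix Q x assume R: "Rel Q" and x: "x \<in> T"
    obtain P where P: "qp P" "Q \<inter> D \<subseteq> P" using Rel_P[OF R] by blast
    have Q: "prime_ideal_of T Q" using R unfolding Rel_def by blast
    show "x \<in> loc D (D - (Q \<inter> D))"
    proof (cases "x = 0")
      case True
      have "1 \<in> D - Q" using D1 prime_props(3)[OF Q] by blast
      then show ?thesis unfolding True eqDQ loc_iff[OF msubD(3)[OF msub_DQ(2)[OF Q]]] using D0 by force
    next
      case False
      have "1 \<in> ll T" using T_sub_ellT T1 by blast
      then have "1 \<in> ll (lin T {d\<in>D. d * x \<in> D})" using H x False by simp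
      then have "1 \<in> lin (loc T (D - P)) (lin T {d\<in>D. d * x \<in> D})" using P(1) unfolding ell_mem by blast
      moreover have "\<exists>s\<in>D - P. s * a \<in> lin T {d\<in>D. d * x \<in> D}" if "a \<in> lin T {d\<in>D. d * x \<in> D}" for a
        using that D1 qp_props(5)[OF P(1)] by (intro bexI[of _ 1]) auto
      ultimately obtain s where s: "s \<in> D - P" "s * 1 \<in> lin T {d\<in>D. d * x \<in> D}"
        using G1[OF T qp_props(7)[OF P(1)] lin_T_submod] by blast
      then show ?thesis using Klem[OF R P(2) x] by simp
    qed
  qed
qed

lemma vi_VN: "(\<forall>N. max_prop_prime D st T N \<longrightarrow> loc D (D - (N \<inter> D)) = loc T (T - N)) \<longleftrightarrow>
    (\<forall>N. max_prop_prime D st T N \<longrightarrow> T \<subseteq> loc D (D - (N \<inter> D)))"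
proof -
  have "loc D (D - (N \<inter> D)) = loc T (T - N) \<longleftrightarrow> T \<subseteq> loc D (D - (N \<inter> D))"
    if "max_prop_prime D st T N" for N
    using F5[of N] that unfolding max_prop_prime_def by blast
  then show ?thesis by blast
qed

lemma v_ii: "V \<longleftrightarrow> (\<forall>P. prime_ideal_of D P \<and> P \<noteq> {0} \<longrightarrow> ll (lin T P) = ll T \<or> T \<subseteq> loc D (D - P))"
proof
  assume V: V
  show "\<forall>P. prime_ideal_of D P \<and> P \<noteq> {0} \<longrightarrow> ll (lin T P) = ll T \<or> T \<subseteq> loc D (D - P)"
  proof (intro allI impI)
    fix P assume P: "prime_ideal_of D P \<and> P \<noteq> {0}"
    have PD: "P \<subseteq> D" using prime_props(5) P by blast
    have sub: "lin T P \<subseteq> T" by (rule lin_T_sub) (use PD DT in blast)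
    show "ll (lin T P) = ll T \<or> T \<subseteq> loc D (D - P)"
    proof (cases "\<forall>P'. qp P' \<longrightarrow> (\<exists>s\<in>D - P'. s \<in> lin T P)")
      case True
      have "ll (lin T P) = ll T"
      proof (rule ell_cong)
        fix P' assume P': "qp P'"
        obtain s where "s \<in> D - P'" "s \<in> lin T P" using True P' by blast
        then have "lin (loc T (D - P')) (lin T P) = loc T (D - P')" by (intro LT[OF T qp_props(7)[OF P'] sub])
        then show "lin (loc T (D - P')) (lin T P) = lin (loc T (D - P')) T" using lin_TP[OF P'] by simp
      qed
      then show ?thesis by blast
    next
      case False
      then obtain P' where P': "qp P'" "lin T P \<inter> (D - P') = {}" by blast
      have J: "ideal_of T (lin T P)" unfolding ideal_of_def using lin_T_submod sub by blast
      obtain Q where Q: "prime_ideal_of T Q" "lin T P \<subseteq> Q" "Q \<inter> (D - P') = {}"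
        using prime_avoid[OF T J qp_props(7)[OF P'(1)] P'(2)] by blast
      have PQ: "P \<subseteq> Q" using gen_in_lin[OF T1, of P] Q(2) by blast
      have "Q \<noteq> {0}" using PQ P prime_props(4)[of D P] by blast
      moreover have "Q \<inter> D \<subseteq> P'" using Q(3) by blast
      ultimately have "Rel Q" using Rel_intro Q(1) P'(1) by blast
      then have "T \<subseteq> loc D (D - (Q \<inter> D))" using V unfolding VC by blast
      moreover have "loc D (D - (Q \<inter> D)) \<subseteq> loc D (D - P)" by (rule loc_mono) (use PQ PD in blast)+
      ultimately show ?thesis by blast
    qed
  qed
next
  assume H: "\<forall>P. prime_ideal_of D P \<and> P \<noteq> {0} \<longrightarrow> ll (lin T P) = ll T \<or> T \<subseteq> loc D (D - P)"
  show V
  proof (rule v_vi[THEN iffD2], rule vi_VN[THEN iffD2], intro allI impI)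
    fix N assume N: "max_prop_prime D st T N"
    have NP: "prime_ideal_of T N" "N \<noteq> {0}" using N unfolding max_prop_prime_def by auto
    have Nsub: "submod T N" using prime_props(1)[OF NP(1)] unfolding ideal_of_def by blast
    have pr: "prime_ideal_of D (N \<inter> D)" unfolding prime_ideal_of_def
    proof (intro conjI ballI impI)
      show "ideal_of D (N \<inter> D)" by (rule ideal_cap_D[OF prime_props(1)[OF NP(1)]])
      show "N \<inter> D \<noteq> D" using prime_props(3)[OF NP(1)] D1 by blast
      fix a b assume "a \<in> D" "b \<in> D" "a * b \<in> N \<inter> D"
      then show "a \<in> N \<inter> D \<or> b \<in> N \<inter> D" using prime_props(6)[OF NP(1), of a b] DT by blast
    qed
    have nz: "N \<inter> D \<noteq> {0}" using NZ[OF prime_props(1)[OF NP(1)] NP(2)] by blast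
    from H pr nz have "ll (lin T (N \<inter> D)) = ll T \<or> T \<subseteq> loc D (D - (N \<inter> D))" by blast
    then show "T \<subseteq> loc D (D - (N \<inter> D))"
    proof
      assume eq: "ll (lin T (N \<inter> D)) = ll T"
      obtain P' where P': "qp P'" "N \<inter> D \<subseteq> P'" using Rel_P[OF max_Rel[OF N]] by blast
      have "1 \<in> ll (lin T (N \<inter> D))" using eq T_sub_ellT T1 by blast
      then have "1 \<in> lin (loc T (D - P')) (lin T (N \<inter> D))" using P'(1) unfolding ell_mem by blast
      moreover have NN: "lin T (N \<inter> D) \<subseteq> N" by (rule lin_least[OF Nsub]) blast
      moreover have "\<exists>s\<in>D - P'. s * a \<in> N" if "a \<in> lin T (N \<inter> D)" for a
        using that NN D1 qp_props(5)[OF P'(1)] by (intro bexI[of _ 1]) auto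
      ultimately obtain s where "s \<in> D - P'" "s * 1 \<in> N"
        using G1[OF T qp_props(7)[OF P'(1)] Nsub] by blast
      then show ?thesis using P'(2) by auto
    qed
  qed
qed

lemma Fin:
  assumes V: V and P: "qp P" and X: "finite X" "X \<subseteq> loc T (D - P)"
  shows "1 \<in> lin (loc T (D - P)) {d\<in>D. \<forall>x\<in>X. d * x \<in> D}"
proof -
  note MS = qp_props(7)[OF P]
  note li = loc_iff[OF msubD(3)[OF MS]]
  note LS = qp_props(9)[OF P]
  define I where "I = {d\<in>D. \<forall>x\<in>X. d * x \<in> D}"
  have "\<forall>x\<in>X. \<exists>s\<in>D - P. s * x \<in> T"
  proof
    fix x assume "x \<in> X"
    then have "x \<in> loc T (D - P)" using X(2) by blast
    then show "\<exists>s\<in>D - P. s * x \<in> T" unfolding li .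
  qed
  then obtain u where u: "u \<in> D - P" "\<forall>x\<in>X. u * x \<in> T" using common_denom[OF T MS X(1)] by blast
  let ?X' = "(\<lambda>x. u * x) ` X"
  obtain s where s: "s \<in> D - P" "s \<in> lin T {d\<in>D. \<forall>y\<in>?X'. d * y \<in> D}"
    using F8[OF V P, of ?X'] X(1) u(2) by blast
  have s0: "s \<noteq> 0" "u \<noteq> 0" using s(1) u(1) qp_props(4)[OF P] by auto
  define Y where "Y = {z. z / s \<in> lin (loc T (D - P)) I}"
  have "submod T Y" unfolding submod_def Y_def
  proof (intro conjI ballI)
    show "0 \<in> {z. z / s \<in> lin (loc T (D - P)) I}" using zero_in_lin by simp
    show "x + y \<in> {z. z / s \<in> lin (loc T (D - P)) I}"
      if "x \<in> {z. z / s \<in> lin (loc T (D - P)) I}" "y \<in> {z. z / s \<in> lin (loc T (D - P)) I}" for x y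
      using that lin_add[OF subringD(1)[OF LS] subringD(3)[OF LS]] by (simp add: add_divide_distrib)
    show "r * x \<in> {z. z / s \<in> lin (loc T (D - P)) I}" if "r \<in> T" "x \<in> {z. z / s \<in> lin (loc T (D - P)) I}" for r x
    proof -
      have "r \<in> loc T (D - P)" using that(1) T_sub_loc[OF P] by blast
      then have "r * (x / s) \<in> lin (loc T (D - P)) I" using lin_scal[OF subringD(5)[OF LS]] that(2) by blast
      then show ?thesis by simp
    qed
  qed
  moreover have "{d\<in>D. \<forall>y\<in>?X'. d * y \<in> D} \<subseteq> Y"
  proof
    fix c assume c: "c \<in> {d\<in>D. \<forall>y\<in>?X'. d * y \<in> D}"
    have uD: "u \<in> D" using u(1) by blast
    have "c * u \<in> D" using c uD Dmul by blast
    moreover have "\<forall>x\<in>X. (c * u) * x \<in> D" using c by (simp add: mult.assoc)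
    ultimately have cu: "c * u \<in> I" unfolding I_def by blast
    have su: "s * u \<in> D - P" using msubD(4)[OF qp_props(8)[OF P] s(1) u(1)] .
    have "(s * u) * (1 / (s * u)) \<in> T" using s0 T1 by simp
    then have inv: "1 / (s * u) \<in> loc T (D - P)" unfolding li using su by blast
    have "(1 / (s * u)) * (c * u) \<in> lin (loc T (D - P)) I" using lin_scal_gen[OF inv cu] .
    moreover have "(1 / (s * u)) * (c * u) = c / s" using s0 by (simp add: field_simps)
    ultimately show "c \<in> Y" unfolding Y_def by simp
  qed
  ultimately have "lin T {d\<in>D. \<forall>y\<in>?X'. d * y \<in> D} \<subseteq> Y" by (rule lin_least)
  then have "s / s \<in> lin (loc T (D - P)) I" using s(2) unfolding Y_def by blast
  then show ?thesis using s0 unfolding I_def by simp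
qed

lemma v_vii: "V \<longleftrightarrow> (\<forall>P. qp P \<longrightarrow> flat_module (loc D (D - P)) (loc T (D - P)))"
proof
  assume V: V
  show "\<forall>P. qp P \<longrightarrow> flat_module (loc D (D - P)) (loc T (D - P))"
  proof (intro allI impI)
    fix P assume P: "qp P"
    show "flat_module (loc D (D - P)) (loc T (D - P))"
    proof (rule flat_crit_rev[OF qp_props(9)[OF P]])
      fix X assume X: "finite X" "X \<subseteq> loc T (D - P)"
      have "1 \<in> lin (loc T (D - P)) {d\<in>D. \<forall>x\<in>X. d * x \<in> D}" by (rule Fin[OF V P X])
      moreover have "{d\<in>D. \<forall>x\<in>X. d * x \<in> D} \<subseteq> {d\<in>loc D (D - P). \<forall>x\<in>X. d * x \<in> loc D (D - P)}"
        using loc_sup[of "D - P" D] qp_props(5)[OF P] D1 by blast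
      ultimately show "1 \<in> lin (loc T (D - P)) {d\<in>loc D (D - P). \<forall>x\<in>X. d * x \<in> loc D (D - P)}"
        using lin_mono[OF _ order_refl] by blast
    qed
  qed
next
  assume H: "\<forall>P. qp P \<longrightarrow> flat_module (loc D (D - P)) (loc T (D - P))"
  show V unfolding VC
  proof (intro allI impI subsetI)
    fix Q x assume R: "Rel Q" and x: "x \<in> T"
    obtain P where P: "qp P" "Q \<inter> D \<subseteq> P" using Rel_P[OF R] by blast
    have fl: "flat_module (loc D (D - P)) (loc T (D - P))" using H P(1) by blast
    have DL: "D \<subseteq> loc D (D - P)" using loc_sup[of "D - P" D] qp_props(5)[OF P(1)] D1 by blast
    have denP: "\<exists>b\<in>loc D (D - P). b \<noteq> 0 \<and> b * y \<in> loc D (D - P)" for y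
      using den[of y] DL by blast
    have xL: "x \<in> loc T (D - P)" using x T_sub_loc[OF P(1)] by blast
    have "1 \<in> lin (loc T (D - P)) {d\<in>loc D (D - P). d * x \<in> loc D (D - P)}"
      by (rule flat_crit_imp[OF qp_props(10)[OF P(1)] denP qp_props(9)[OF P(1)] fl xL])
    moreover have "\<exists>s\<in>D - P. s * a \<in> lin T {d\<in>D. d * x \<in> D}" if a: "a \<in> {d\<in>loc D (D - P). d * x \<in> loc D (D - P)}" for a
    proof -
      note liD = loc_iff[OF msubD(3)[OF qp_props(8)[OF P(1)]]]
      have a1: "a \<in> loc D (D - P)" and a2: "a * x \<in> loc D (D - P)" using a by auto
      obtain s1 where s1: "s1 \<in> D - P" "s1 * a \<in> D" using a1 unfolding liD by blast
      obtain s2 where s2: "s2 \<in> D - P" "s2 * (a * x) \<in> D" using a2 unfolding liD by blast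
      have eq1: "(s1 * s2) * a = s2 * (s1 * a)" by (simp add: algebra_simps)
      have e1: "(s1 * s2) * a \<in> D" unfolding eq1 using Dmul[of s2 "s1 * a"] s1 s2 by blast
      have eq2: "((s1 * s2) * a) * x = s1 * (s2 * (a * x))" by (simp add: algebra_simps)
      have e2: "((s1 * s2) * a) * x \<in> D" unfolding eq2 using Dmul[of s1 "s2 * (a * x)"] s1 s2 by blast
      have "(s1 * s2) * a \<in> lin T {d\<in>D. d * x \<in> D}" using gen_in_lin[OF T1, of "{d\<in>D. d * x \<in> D}"] e1 e2 by blast
      then show ?thesis using msubD(4)[OF qp_props(8)[OF P(1)] s1(1) s2(1)] by blast
    qed
    ultimately obtain s where s: "s \<in> D - P" "s * 1 \<in> lin T {d\<in>D. d * x \<in> D}"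
      using G1[OF T qp_props(7)[OF P(1)] lin_T_submod] by blast
    then show "x \<in> loc D (D - (Q \<inter> D))" using Klem[OF R P(2) x] by simp
  qed
qed

lemma v_viii: "V \<longleftrightarrow> (\<forall>F\<in>fgen D. ll (lin T (colon D F)) = colon (ll T) (lin T F))"
proof
  assume V: V
  show "\<forall>F\<in>fgen D. ll (lin T (colon D F)) = colon (ll T) (lin T F)"
  proof
    fix F assume F: "F \<in> fgen D"
    obtain G where G: "finite G" "F = lin D G" using F unfolding fgen_def by blast
    have CG: "colon D F = colon D G" using colon_lin[OF D] G(2) by simp
    have GF: "G \<subseteq> F" using gen_in_lin[OF D1, of G] G(2) by simp
    have "F \<subseteq> lin T G" unfolding G(2) by (rule lin_mono[OF order_refl DT])
    then have FT: "lin T F \<subseteq> lin T G" by (rule lin_least[OF lin_T_submod])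
    have GlinF: "G \<subseteq> lin T F" using GF gen_in_lin[OF T1, of F] by blast
    show "ll (lin T (colon D F)) = colon (ll T) (lin T F)"
    proof (rule set_eqI)
      fix y
      have per: "y \<in> lin (loc T (D - P)) (lin T (colon D F)) \<longleftrightarrow> (\<forall>b\<in>lin T F. y * b \<in> loc T (D - P))"
        if P: "qp P" for P
      proof -
        note LS = qp_props(9)[OF P]
        have TL: "T \<subseteq> loc T (D - P)" by (rule T_sub_loc[OF P])
        have a1: "lin (loc T (D - P)) (lin T (colon D F)) = lin (loc T (D - P)) (colon D F)"
        proof
          have "lin T (colon D F) \<subseteq> lin (loc T (D - P)) (colon D F)" by (rule lin_mono[OF order_refl TL])
          then show "lin (loc T (D - P)) (lin T (colon D F)) \<subseteq> lin (loc T (D - P)) (colon D F)"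
            by (rule lin_least[OF lin_submod[OF LS]])
          show "lin (loc T (D - P)) (colon D F) \<subseteq> lin (loc T (D - P)) (lin T (colon D F))"
            by (rule lin_mono[OF gen_in_lin[OF T1] order_refl])
        qed
        show ?thesis unfolding a1
        proof
          assume y: "y \<in> lin (loc T (D - P)) (colon D F)"
          show "\<forall>b\<in>lin T F. y * b \<in> loc T (D - P)"
          proof
            fix b assume "b \<in> lin T F"
            then have b: "b \<in> lin T G" using FT by blast
            show "y * b \<in> loc T (D - P)"
            proof (rule lin_mult[OF LS T subring_submod[OF LS order_refl] _ _ y b])
              show "a * c \<in> loc T (D - P)" if "a \<in> loc T (D - P)" "c \<in> T" for a c
                using that TL subringD(5)[OF LS] by blast
              show "a * c \<in> loc T (D - P)" if "a \<in> colon D F" "c \<in> G" for a c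
              proof -
                have "a * c \<in> D" using that GF unfolding colon_def by blast
                then show ?thesis using DT TL by blast
              qed
            qed
          qed
        next
          assume Hy: "\<forall>b\<in>lin T F. y * b \<in> loc T (D - P)"
          have X: "finite ((\<lambda>g. y * g) ` G)" "(\<lambda>g. y * g) ` G \<subseteq> loc T (D - P)" using G(1) Hy GlinF by auto
          have one: "1 \<in> lin (loc T (D - P)) {d\<in>D. \<forall>x\<in>(\<lambda>g. y * g) ` G. d * x \<in> D}" by (rule Fin[OF V P X])
          define Y where "Y = {z. y * z \<in> lin (loc T (D - P)) (colon D F)}"
          have "submod (loc T (D - P)) Y" unfolding submod_def Y_def
          proof (intro conjI ballI)
            show "0 \<in> {z. y * z \<in> lin (loc T (D - P)) (colon D F)}" using zero_in_lin by simp
            show "a + b \<in> {z. y * z \<in> lin (loc T (D - P)) (colon D F)}"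
              if "a \<in> {z. y * z \<in> lin (loc T (D - P)) (colon D F)}" "b \<in> {z. y * z \<in> lin (loc T (D - P)) (colon D F)}" for a b
              using that lin_add[OF subringD(1)[OF LS] subringD(3)[OF LS]] by (simp add: distrib_left)
            show "r * a \<in> {z. y * z \<in> lin (loc T (D - P)) (colon D F)}"
              if "r \<in> loc T (D - P)" "a \<in> {z. y * z \<in> lin (loc T (D - P)) (colon D F)}" for r a
            proof -
              have "r * (y * a) \<in> lin (loc T (D - P)) (colon D F)" using that lin_scal[OF subringD(5)[OF LS]] by blast
              then show ?thesis by (simp add: mult.left_commute)
            qed
          qed
          moreover have "{d\<in>D. \<forall>x\<in>(\<lambda>g. y * g) ` G. d * x \<in> D} \<subseteq> Y"
          proof
            fix d assume d: "d \<in> {d\<in>D. \<forall>x\<in>(\<lambda>g. y * g) ` G. d * x \<in> D}"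
            have "\<forall>g\<in>G. (y * d) * g \<in> D"
            proof
              fix g assume "g \<in> G"
              then have "d * (y * g) \<in> D" using d by blast
              then show "(y * d) * g \<in> D" by (simp add: algebra_simps)
            qed
            then have "y * d \<in> colon D F" unfolding CG unfolding colon_def by blast
            then have "y * d \<in> lin (loc T (D - P)) (colon D F)" using gen_in_lin[OF subringD(2)[OF LS]] by blast
            then show "d \<in> Y" unfolding Y_def by blast
          qed
          ultimately have "lin (loc T (D - P)) {d\<in>D. \<forall>x\<in>(\<lambda>g. y * g) ` G. d * x \<in> D} \<subseteq> Y" by (rule lin_least)
          then have "y * 1 \<in> lin (loc T (D - P)) (colon D F)" using one unfolding Y_def by blast
          then show "y \<in> lin (loc T (D - P)) (colon D F)" by simp
        qed
      qed
      have "y \<in> ll (lin T (colon D F)) \<longleftrightarrow> (\<forall>P. qp P \<longrightarrow> y \<in> lin (loc T (D - P)) (lin T (colon D F)))"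
        by (rule ell_mem)
      also have "\<dots> \<longleftrightarrow> (\<forall>P. qp P \<longrightarrow> (\<forall>b\<in>lin T F. y * b \<in> loc T (D - P)))" using per by blast
      also have "\<dots> \<longleftrightarrow> y \<in> colon (ll T) (lin T F)" unfolding colon_def ellT_mem by blast
      finally show "y \<in> ll (lin T (colon D F)) \<longleftrightarrow> y \<in> colon (ll T) (lin T F)" .
    qed
  qed
next
  assume H: "\<forall>F\<in>fgen D. ll (lin T (colon D F)) = colon (ll T) (lin T F)"
  show V
  proof (rule v_iii[THEN iffD2], intro ballI impI)
    fix x assume x: "x \<in> T" "x \<noteq> 0"
    let ?F = "lin D {1, x}"
    have F: "?F \<in> fgen D" by (rule fgen_lin[of _ 1]) auto
    have C: "colon D ?F = {d\<in>D. d * x \<in> D}" unfolding colon_lin[OF D] unfolding colon_def by auto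
    have FT: "?F \<subseteq> T" by (rule lin_least[OF subring_submod[OF T DT]]) (use x T1 in auto)
    have lFT: "lin T ?F \<subseteq> T" by (rule lin_T_sub[OF FT])
    have one: "1 \<in> lin T ?F" using gen_in_lin[OF D1, of "{1, x}"] gen_in_lin[OF T1, of ?F] by blast
    have "colon (ll T) (lin T ?F) = ll T"
    proof
      show "colon (ll T) (lin T ?F) \<subseteq> ll T"
      proof
        fix y assume "y \<in> colon (ll T) (lin T ?F)"
        then have "y * 1 \<in> ll T" using one unfolding colon_def by blast
        then show "y \<in> ll T" by simp
      qed
      show "ll T \<subseteq> colon (ll T) (lin T ?F)"
      proof
        fix y assume y: "y \<in> ll T"
        show "y \<in> colon (ll T) (lin T ?F)" unfolding colon_def
        proof (intro CollectI ballI)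
          fix b assume "b \<in> lin T ?F"
          then have b: "b \<in> T" using lFT by blast
          show "y * b \<in> ll T" unfolding ellT_mem
          proof (intro allI impI)
            fix P assume P: "qp P"
            have "y \<in> loc T (D - P)" using y P unfolding ellT_mem by blast
            moreover have "b \<in> loc T (D - P)" using b T_sub_loc[OF P] by blast
            ultimately show "y * b \<in> loc T (D - P)" using subringD(5)[OF qp_props(9)[OF P]] by blast
          qed
        qed
      qed
    qed
    then show "ll (lin T {d\<in>D. d * x \<in> D}) = ll T" using H F C by metis
  qed
qed

end


theorem proposition4p6:
  fixes D T :: "'a::field set" and st :: "'a set \<Rightarrow> 'a set"
  assumes "subring D" and "quotient_field_is_univ D"
    and "overring D T" and "semistar D st"
  defines "l \<equiv> ell D st T"
  shows
   "(flat_st D st T l \<longleftrightarrow>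
      (\<forall>P. prime_ideal_of D P \<and> P \<noteq> {0} \<longrightarrow> l (lin T P) = l T \<or> T \<subseteq> loc D (D - P)))
  \<and> (flat_st D st T l \<longleftrightarrow>
      (\<forall>x\<in>T. x \<noteq> 0 \<longrightarrow> l (lin T {d\<in>D. d * x \<in> D}) = l T))
  \<and> (flat_st D st T l \<longleftrightarrow>
      l T = \<Inter>{loc D (D - (N \<inter> D)) | N. max_prop_prime D st T N})
  \<and> (flat_st D st T l \<longleftrightarrow>
      (\<forall>Q. prime_ideal_of T Q \<and> Q \<noteq> {0} \<and> starf D st (Q \<inter> D) \<noteq> st D \<longrightarrow>
           loc D (D - (Q \<inter> D)) = loc T (T - Q)))
  \<and> (flat_st D st T l \<longleftrightarrow>
      (\<forall>N. max_prop_prime D st T N \<longrightarrow> loc D (D - (N \<inter> D)) = loc T (T - N)))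
  \<and> (flat_st D st T l \<longleftrightarrow>
      (\<forall>P. quasi_prime D (starf D st) P \<longrightarrow> flat_module (loc D (D - P)) (loc T (D - P))))
  \<and> (flat_st D st T l \<longleftrightarrow>
      (\<forall>F\<in>fgen D. l (lin T (colon D F)) = colon (l T) (lin T F)))"
proof -
  interpret C: ctx D T st
    by (rule ctx.intro) (rule assms)+
  have i: "flat_st D st T (ell D st T) \<longleftrightarrow> C.V" by (rule C.i_iff)
  show ?thesis unfolding l_def i
    using C.v_ii C.v_iii C.v_iv C.v_vi C.v_vii C.v_viii
    unfolding C.V_def[symmetric]
    by blast
qed

end
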